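(* Let $a<b$ be coprime positive integers with $\alpha=\sqrt{b/a}\notin\mathbb{Q}$, let $\Lambda\subset\mathbb{Z}^2$ be a full-rank sublattice containing a primitive vector, and let $\varepsilon,K>0$. Assume $$\frac12<r<\frac7{10},\qquad K^2b\le U(\alpha,\varepsilon)\,B^{\frac45(\frac1r-1)-\frac35(2-\frac1r)}\ \text{ with } U(\alpha,\varepsilon)=(2^{21}\cdot162\,\alpha^2\varepsilon^2)^{-2/5},\qquad b\det(\Lambda)^2\le K^2B^{2-\frac1r}.$$ Then for $B$ sufficiently large in terms of $\alpha,\varepsilon$, $$\#S(\varepsilon,K,\Lambda,B)=\frac{\Theta(\Lambda)\varepsilon K^2}{2}B^{2-\frac1r}+O\Big(K^{3/2}b^{1/4}\det(\Lambda)^{1/2}B^{\frac34(2-\frac1r)}\log B+Kb^{3/2}B^{1-\frac1{2r}}\log B\Big),$$ where the implied constant depends at most on $\alpha$, $\varepsilon$ and $r$.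
   Context: $S(\varepsilon,K,\Lambda,B)$ is the set of $(u,v)\in\Lambda\cap\mathbb{N}^2$ with $\gcd(u,v)=1$, $0<\frac uv-\alpha\le\varepsilon B^{-1/r}$ and $v\le KB$. For $d\ge1$, $\Lambda_d=\Lambda\cap d\mathbb{Z}^2$, and $\Theta(\Lambda)=\sum_{d\ge1}\mu(d)/\det(\Lambda_d)$, which equals $\frac{6}{\pi^2}\frac{\Psi_1(\det\Lambda)}{\det\Lambda}$ with $\Psi_1(n)=\prod_{p\mid n}(1+1/p)^{-1}$; $\mu$ is the Möbius function. *)

theory Defs
  imports "HOL-Analysis.Analysis" "HOL-Computational_Algebra.Squarefree"
begin

definition moebius :: "nat \<Rightarrow> int" where
  "moebius n = (if n = 0 \<or> \<not> squarefree n then 0 else (-1) ^ card (prime_factors n))"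

definition full_lattice :: "(int \<times> int) set \<Rightarrow> bool" where
  "full_lattice L \<longleftrightarrow> (\<exists>p q r s :: int. p * s - q * r \<noteq> 0 \<and>
      L = {(m * p + n * r, m * q + n * s) | m n. True})"

text \<open>Determinant (covolume) of a full-rank sublattice of Z^2, defined as its index in Z^2,
  i.e. the number of cosets of L in Z^2.\<close>
definition lattice_det :: "(int \<times> int) set \<Rightarrow> nat" where
  "lattice_det L = card ((\<lambda>x. {y. (fst x - fst y, snd x - snd y) \<in> L}) ` (UNIV :: (int \<times> int) set))"

definition lattice_d :: "(int \<times> int) set \<Rightarrow> nat \<Rightarrow> (int \<times> int) set" where
  "lattice_d L d = L \<inter> {(x, y). int d dvd x \<and> int d dvd y}"

definition Theta :: "(int \<times> int) set \<Rightarrow> real" where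
  "Theta L = (\<Sum>n. real_of_int (moebius (Suc n)) / real (lattice_det (lattice_d L (Suc n))))"

definition S_set :: "real \<Rightarrow> real \<Rightarrow> real \<Rightarrow> real \<Rightarrow> (int \<times> int) set \<Rightarrow> real \<Rightarrow> (nat \<times> nat) set" where
  "S_set \<alpha> r \<epsilon> K L B = {(u, v). (int u, int v) \<in> L \<and> coprime u v \<and>
      0 < real u / real v - \<alpha> \<and> real u / real v - \<alpha> \<le> \<epsilon> * B powr (- 1 / r) \<and>
      real v \<le> K * B}"

end

theory Submission
  imports Defs
begin

lemma count_hop:
  fixes x y a s :: real
  assumes s: "s > 0" and xy: "x \<le> y"
  shows "real (card {j. x \<le> a + of_int (j::int) * s \<and> a + of_int (j::int) * s < y}) \<ge> (y-x)/s - 1"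
    and "real (card {j. x \<le> a + of_int (j::int) * s \<and> a + of_int (j::int) * s < y}) \<le> (y-x)/s + 1"
proof -
  have eq: "{j. x \<le> a + of_int (j::int) * s \<and> a + of_int (j::int) * s < y} = {\<lceil>(x-a)/s\<rceil>..<\<lceil>(y-a)/s\<rceil>}"
  proof (rule set_eqI)
    fix j :: int
    have "x \<le> a + of_int (j::int) * s \<longleftrightarrow> (x-a)/s \<le> j" using s by (simp add: field_simps)
    moreover have "a + of_int (j::int) * s < y \<longleftrightarrow> j < (y-a)/s" using s by (simp add: field_simps)
    ultimately show "j \<in> {j. x \<le> a + of_int (j::int) * s \<and> a + of_int (j::int) * s < y} \<longleftrightarrow> j \<in> {\<lceil>(x-a)/s\<rceil>..<\<lceil>(y-a)/s\<rceil>}"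
      by (simp add: ceiling_le_iff less_ceiling_iff)
  qed
  have mono: "\<lceil>(x-a)/s\<rceil> \<le> \<lceil>(y-a)/s\<rceil>"
    using s xy by (intro ceiling_mono) (simp add: divide_right_mono)
  have c: "real (card {j. x \<le> a + of_int (j::int) * s \<and> a + of_int (j::int) * s < y}) = of_int \<lceil>(y-a)/s\<rceil> - of_int \<lceil>(x-a)/s\<rceil>"
    using mono by (simp add: eq)
  have d: "(y-a)/s - (x-a)/s = (y-x)/s" using s by (simp add: field_simps)
  have "of_int \<lceil>(y-a)/s\<rceil> \<ge> (y-a)/s" "of_int \<lceil>(y-a)/s\<rceil> \<le> (y-a)/s + 1"
       "of_int \<lceil>(x-a)/s\<rceil> \<ge> (x-a)/s" "of_int \<lceil>(x-a)/s\<rceil> \<le> (x-a)/s + 1"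
    by (simp_all add: le_of_int_ceiling)
  then show "real (card {j. x \<le> a + of_int (j::int) * s \<and> a + of_int (j::int) * s < y}) \<ge> (y-x)/s - 1"
    and "real (card {j. x \<le> a + of_int (j::int) * s \<and> a + of_int (j::int) * s < y}) \<le> (y-x)/s + 1"
    using c d by linarith+
qed

lemma moebius_abs_le: "\<bar>moebius n\<bar> \<le> 1"
  by (simp add: moebius_def)

lemma moebius_sum:
  fixes n :: nat
  assumes "n > 0"
  shows "(\<Sum>d | d dvd n. moebius d) = (if n = 1 then 1 else 0)"
proof (cases "n = 1")
  case True
  then show ?thesis by (simp add: moebius_def)
next
  case False
  with assms have n1: "n > 1" by simp
  obtain p where p: "prime p" "p dvd n" using prime_factor_nat[of n] n1 by auto
  have fin: "finite {d. d dvd n}" using assms by simp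
  define D0 where "D0 = {d. d dvd n \<and> squarefree d \<and> \<not> p dvd d}"
  define D1 where "D1 = {d. d dvd n \<and> squarefree d \<and> p dvd d}"
  have "(\<Sum>d | d dvd n. moebius d) = (\<Sum>d \<in> D0 \<union> D1. moebius d)"
    by (rule sum.mono_neutral_right) (auto simp: fin D0_def D1_def moebius_def)
  also have "\<dots> = (\<Sum>d \<in> D0. moebius d) + (\<Sum>d \<in> D1. moebius d)"
    by (rule sum.union_disjoint) (auto simp: D0_def D1_def intro: finite_subset[OF _ fin])
  also have "(\<Sum>d \<in> D1. moebius d) = (\<Sum>d \<in> D0. moebius (d * p))"
  proof (rule sum.reindex_bij_witness[of _ "\<lambda>d. d * p" "\<lambda>d. d div p"])
    fix d assume d: "d \<in> D0"
    show "d * p div p = d" using p by simp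
    have cop: "coprime d p" using d p by (metis D0_def mem_Collect_eq prime_imp_coprime coprime_commute)
    show "d * p \<in> D1" using d p cop
      by (auto simp: D0_def D1_def divides_mult squarefree_mult_coprime squarefree_prime)
  next
    fix d assume d: "d \<in> D1"
    then obtain d' where dd: "d = p * d'" by (auto simp: D1_def elim: dvdE)
    show "d div p * p = d" using dd p by (simp add: prime_gt_0_nat)
    have "d' dvd n" using d dd by (auto simp: D1_def intro: dvd_trans)
    moreover have "squarefree d'" using d dd squarefree_mono[of d' d] by (auto simp: D1_def)
    moreover have "\<not> p dvd d'"
    proof
      assume "p dvd d'"
      then have "p^2 dvd d" using dd by (auto simp: power2_eq_square)
      then have "p dvd 1" using d squarefreeD[of d p] by (auto simp: D1_def)
      then show False using p by simp
    qed
    ultimately show "d div p \<in> D0" using dd p by (simp add: D0_def prime_gt_0_nat)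
    show "moebius (d div p * p) = moebius d" using dd p by (simp add: prime_gt_0_nat mult.commute)
  qed
  also have "(\<Sum>d \<in> D0. moebius d) + (\<Sum>d \<in> D0. moebius (d * p)) = (\<Sum>d \<in> D0. moebius d + moebius (d*p))"
    by (simp add: sum.distrib)
  also have "\<dots> = 0"
  proof (rule sum.neutral, rule ballI)
    fix d assume d: "d \<in> D0"
    have cop: "coprime d p" using d p by (metis D0_def mem_Collect_eq prime_imp_coprime coprime_commute)
    have d0: "d \<noteq> 0" using d assms by (auto simp: D0_def)
    have sq: "squarefree (d*p)" using d p cop by (auto simp: D0_def squarefree_mult_coprime squarefree_prime)
    have pf: "prime_factors (d*p) = insert p (prime_factors d)"
      using d0 p by (simp add: prime_factors_product prime_prime_factors)
    have pn: "p \<notin> prime_factors d" using d by (auto simp: D0_def)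
    have "card (prime_factors (d*p)) = Suc (card (prime_factors d))" using pf pn by simp
    then show "moebius d + moebius (d*p) = 0" using d sq d0 p
      by (auto simp: moebius_def D0_def prime_gt_0_nat)
  qed
  finally show ?thesis using False by simp
qed


definition grp :: "(int \<times> int) set \<Rightarrow> bool" where
  "grp G \<longleftrightarrow> (0,0) \<in> G \<and> (\<forall>x\<in>G. \<forall>y\<in>G. (fst x - fst y, snd x - snd y) \<in> G)"

lemma grp_0: "grp G \<Longrightarrow> (0,0) \<in> G" by (simp add: grp_def)

lemma grp_diff: "grp G \<Longrightarrow> (a,b) \<in> G \<Longrightarrow> (c,e) \<in> G \<Longrightarrow> (a - c, b - e) \<in> G"
proof -
  assume "grp G" "(a,b) \<in> G" "(c,e) \<in> G"
  then have "(fst (a,b) - fst (c,e), snd (a,b) - snd (c,e)) \<in> G" unfolding grp_def by blast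
  then show ?thesis by simp
qed

lemma grp_neg: "grp G \<Longrightarrow> (a,b) \<in> G \<Longrightarrow> (-a, -b) \<in> G"
  using grp_diff[of G 0 0 a b] grp_0 by simp

lemma grp_add: "grp G \<Longrightarrow> (a,b) \<in> G \<Longrightarrow> (c,e) \<in> G \<Longrightarrow> (a + c, b + e) \<in> G"
  using grp_diff[of G a b "-c" "-e"] grp_neg[of G c e] by simp

lemma grp_nat_mult: "grp G \<Longrightarrow> (a,b) \<in> G \<Longrightarrow> (int n * a, int n * b) \<in> G"
proof (induction n)
  case 0 then show ?case by (simp add: grp_0)
next
  case (Suc n)
  then have "(int n * a + a, int n * b + b) \<in> G" by (intro grp_add) auto
  then show ?case by (simp add: algebra_simps)
qed

lemma grp_mult: "grp G \<Longrightarrow> (a,b) \<in> G \<Longrightarrow> (t * a, t * b) \<in> G"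
proof (cases "t \<ge> 0")
  case True
  assume "grp G" "(a,b) \<in> G"
  then show ?thesis using grp_nat_mult[of G a b "nat t"] True by simp
next
  case False
  assume g: "grp G" "(a,b) \<in> G"
  then have "(int (nat (-t)) * a, int (nat (-t)) * b) \<in> G" by (rule grp_nat_mult)
  then have "(-(int (nat (-t)) * a), -(int (nat (-t)) * b)) \<in> G" using g by (intro grp_neg) auto
  then show ?thesis using False by simp
qed

lemma zsub:
  fixes H :: "int set"
  assumes "0 \<in> H" "\<And>x y. x \<in> H \<Longrightarrow> y \<in> H \<Longrightarrow> x - y \<in> H" "t0 \<in> H" "t0 > 0"
  shows "int (LEAST n. n > 0 \<and> int n \<in> H) > 0 \<and>
         (\<forall>t. t \<in> H \<longleftrightarrow> int (LEAST n. n > 0 \<and> int n \<in> H) dvd t)"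
proof -
  define g where "g = (LEAST n. n > 0 \<and> int n \<in> H)"
  have ex: "nat t0 > 0 \<and> int (nat t0) \<in> H" using assms by simp
  have g: "g > 0 \<and> int g \<in> H" unfolding g_def by (rule LeastI, rule ex)
  have gmin: "\<And>n. n > 0 \<Longrightarrow> int n \<in> H \<Longrightarrow> g \<le> n" unfolding g_def by (rule Least_le) simp
  have neg: "-x \<in> H" if "x \<in> H" for x using assms(2)[OF assms(1) that] by simp
  have add: "x + y \<in> H" if "x \<in> H" "y \<in> H" for x y
    using assms(2)[OF that(1) neg[OF that(2)]] by simp
  have natm: "int n * x \<in> H" if "x \<in> H" for n x
  proof (induction n)
    case 0 then show ?case using assms(1) by simp
  next
    case (Suc n)
    have "int n * x + x \<in> H" using add[OF Suc that] .
    then show ?case by (simp add: algebra_simps)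
  qed
  have mult: "t * x \<in> H" if "x \<in> H" for t x
  proof (cases "t \<ge> 0")
    case True then show ?thesis using natm[OF that, of "nat t"] by simp
  next
    case False then show ?thesis using neg[OF natm[OF that, of "nat (-t)"]] by simp
  qed
  have "t \<in> H \<longleftrightarrow> int g dvd t" for t
  proof
    assume t: "t \<in> H"
    have "t mod int g = t - (t div int g) * int g" by (simp add: minus_div_mult_eq_mod)
    also have "\<dots> \<in> H" using t g mult by (intro assms(2)) auto
    finally have m: "t mod int g \<in> H" .
    have m0: "t mod int g \<ge> 0" "t mod int g < int g" using g by auto
    show "int g dvd t"
    proof (rule ccontr)
      assume "\<not> int g dvd t"
      then have "t mod int g > 0" using m0 by (simp add: dvd_eq_mod_eq_0 order_le_less)
      then have "g \<le> nat (t mod int g)" using m by (intro gmin) auto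
      then show False using m0 by linarith
    qed
  next
    assume "int g dvd t"
    then obtain c where "t = int g * c" by (auto elim: dvdE)
    then show "t \<in> H" using mult[of "int g" c] g by (simp add: mult.commute)
  qed
  then show ?thesis unfolding g_def[symmetric] using g by simp
qed


lemma dvd_small: "(h::int) dvd x \<Longrightarrow> \<bar>x\<bar> < h \<Longrightarrow> x = 0"
  using dvd_imp_le_int[of x h] by force

locale lat =
  fixes G :: "(int \<times> int) set" and M p q e1 e2 :: int
  assumes grp: "grp G" and Mpos: "M > 0" and M1: "(M,0) \<in> G" and M2: "(0,M) \<in> G"
    and det1: "p*e2 - q*e1 = 1"
begin

definition kf :: "int \<times> int \<Rightarrow> int" where "kf x = snd x * p - fst x * q"
definition mf :: "int \<times> int \<Rightarrow> int" where "mf x = fst x * e2 - snd x * e1"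
definition emb :: "int \<Rightarrow> int \<Rightarrow> int \<times> int" where "emb k m = (k*e1 + m*p, k*e2 + m*q)"

lemma emb_inv: "emb (kf x) (mf x) = x"
proof -
  have "(snd x * p - fst x * q) * e1 + (fst x * e2 - snd x * e1) * p = fst x * (p*e2 - q*e1)"
    by (simp add: algebra_simps)
  moreover have "(snd x * p - fst x * q) * e2 + (fst x * e2 - snd x * e1) * q = snd x * (p*e2 - q*e1)"
    by (simp add: algebra_simps)
  ultimately show ?thesis using det1 by (simp add: emb_def kf_def mf_def prod_eq_iff)
qed

lemma kf_emb: "kf (emb k m) = k"
proof -
  have "(k*e2 + m*q) * p - (k*e1 + m*p) * q = k * (p*e2 - q*e1)" by (simp add: algebra_simps)
  then show ?thesis using det1 by (simp add: emb_def kf_def)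
qed

lemma mf_emb: "mf (emb k m) = m"
proof -
  have "(k*e1 + m*p) * e2 - (k*e2 + m*q) * e1 = m * (p*e2 - q*e1)" by (simp add: algebra_simps)
  then show ?thesis using det1 by (simp add: emb_def mf_def)
qed

lemma kf_diff: "kf (a - c, b - e) = kf (a,b) - kf (c,e)"
  by (simp add: kf_def algebra_simps)

lemma G_lin: "(a,b) \<in> G \<Longrightarrow> (c,e) \<in> G \<Longrightarrow> (s*a + t*c, s*b + t*e) \<in> G"
  using grp grp_add grp_mult by blast

lemma G_all_M: "(M*x, M*y) \<in> G"
  using G_lin[OF M1 M2, of x y] by (simp add: algebra_simps)

definition Hg where "Hg = {t. (t*p, t*q) \<in> G}"
definition Hh where "Hh = {k. \<exists>x\<in>G. kf x = k}"
definition g where "g = int (LEAST n. n > 0 \<and> int n \<in> Hg)"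
definition h where "h = int (LEAST n. n > 0 \<and> int n \<in> Hh)"

lemma g_props: "g > 0 \<and> (\<forall>t. t \<in> Hg \<longleftrightarrow> g dvd t)"
  unfolding g_def
proof (rule zsub[of Hg M])
  show "0 \<in> Hg" using grp_0[OF grp] by (simp add: Hg_def)
  show "x - y \<in> Hg" if "x \<in> Hg" "y \<in> Hg" for x y
    using grp_diff[OF grp, of "x*p" "x*q" "y*p" "y*q"] that by (simp add: Hg_def algebra_simps)
  show "M \<in> Hg" using G_all_M[of p q] by (simp add: Hg_def)
  show "M > 0" by (rule Mpos)
qed

lemma h_props: "h > 0 \<and> (\<forall>t. t \<in> Hh \<longleftrightarrow> h dvd t)"
  unfolding h_def
proof (rule zsub[of Hh M])
  show "0 \<in> Hh" using grp_0[OF grp] by (auto simp: Hh_def kf_def intro!: bexI[of _ "(0,0)"])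
  show "x - y \<in> Hh" if xh: "x \<in> Hh" and yh: "y \<in> Hh" for x y
  proof -
    obtain x1 where ab: "x1 \<in> G" "kf x1 = x" using xh unfolding Hh_def by blast
    obtain y1 where ce: "y1 \<in> G" "kf y1 = y" using yh unfolding Hh_def by blast
    have "(fst x1 - fst y1, snd x1 - snd y1) \<in> G" using grp ab(1) ce(1) unfolding grp_def by blast
    moreover have "kf (fst x1 - fst y1, snd x1 - snd y1) = x - y" using ab ce by (simp add: kf_def algebra_simps)
    ultimately show ?thesis by (auto simp: Hh_def)
  qed
  show "M \<in> Hh"
  proof -
    have "(M*e1, M*e2) \<in> G" by (rule G_all_M)
    moreover have "kf (M*e1, M*e2) = M * (p*e2 - q*e1)" by (simp add: kf_def algebra_simps)
    ultimately show ?thesis using det1 by (auto simp: Hh_def)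
  qed
  show "M > 0" by (rule Mpos)
qed

lemma g_pos: "g > 0" and g_dvd: "(t*p, t*q) \<in> G \<longleftrightarrow> g dvd t"
  using g_props by (auto simp: Hg_def)

lemma h_pos: "h > 0" and h_dvd: "(\<exists>x\<in>G. kf x = k) \<longleftrightarrow> h dvd k"
  using h_props by (auto simp: Hh_def)

lemma emb0: "emb 0 t = (t*p, t*q)" by (simp add: emb_def)

definition C :: "int \<times> int \<Rightarrow> (int \<times> int) set" where
  "C x = {y. (fst x - fst y, snd x - snd y) \<in> G}"

lemma C_eq: "C x = C y \<longleftrightarrow> (fst x - fst y, snd x - snd y) \<in> G"
proof
  assume e: "C x = C y"
  have "y \<in> C y" using grp_0[OF grp] by (simp add: C_def)
  then have "y \<in> C x" using e by simp
  then show "(fst x - fst y, snd x - snd y) \<in> G" by (simp add: C_def)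
next
  assume xy: "(fst x - fst y, snd x - snd y) \<in> G"
  show "C x = C y"
  proof (rule set_eqI)
    fix z
    have "(fst x - fst z, snd x - snd z) \<in> G" if "(fst y - fst z, snd y - snd z) \<in> G"
      using grp_add[OF grp xy that] by simp
    moreover have "(fst y - fst z, snd y - snd z) \<in> G" if "(fst x - fst z, snd x - snd z) \<in> G"
      using grp_diff[OF grp that xy] by simp
    ultimately show "z \<in> C x \<longleftrightarrow> z \<in> C y" by (auto simp: C_def)
  qed
qed

definition Rs where "Rs = (\<lambda>(k,m). emb k m) ` ({0..<h} \<times> {0..<g})"

lemma emb_inj: "emb k m = emb k' m' \<Longrightarrow> k = k' \<and> m = m'"
  by (metis kf_emb mf_emb)

lemma emb_diff: "(fst (emb k m) - fst (emb k' m'), snd (emb k m) - snd (emb k' m')) = emb (k - k') (m - m')"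
  by (simp add: emb_def algebra_simps)

lemma card_Rs: "card Rs = nat g * nat h"
proof -
  have "inj_on (\<lambda>(k,m). emb k m) ({0..<h} \<times> {0..<g})"
    by (auto simp: inj_on_def dest: emb_inj)
  then have "card Rs = card ({0..<h} \<times> {0..<g})" unfolding Rs_def by (rule card_image)
  then show ?thesis by (simp add: card_cartesian_product)
qed

lemma C_image: "range C = C ` Rs"
proof -
  have "C x \<in> C ` Rs" for x
  proof -
    define k where "k = kf x"
    define m where "m = mf x"
    have x: "x = emb k m" using emb_inv by (simp add: k_def m_def)
    obtain \<gamma> where \<gamma>: "\<gamma> \<in> G" "kf \<gamma> = h" using h_dvd[of h] by auto
    define m\<gamma> where "m\<gamma> = mf \<gamma>"
    have \<gamma>e: "\<gamma> = emb h m\<gamma>" using emb_inv[of \<gamma>] \<gamma> by (simp add: m\<gamma>_def)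
    define t where "t = k div h"
    define m1 where "m1 = m - t * m\<gamma>"
    define t' where "t' = m1 div g"
    define r where "r = emb (k mod h) (m1 mod g)"
    have r: "r \<in> Rs" using g_pos h_pos by (auto simp: Rs_def r_def)
    have "(t * fst \<gamma>, t * snd \<gamma>) \<in> G" using grp_mult[OF grp, of "fst \<gamma>" "snd \<gamma>" t] \<gamma> by simp
    moreover have "((t'*g)*p, (t'*g)*q) \<in> G" using g_dvd[of "t'*g"] by simp
    ultimately have in_G: "(t * fst \<gamma> + (t'*g)*p, t * snd \<gamma> + (t'*g)*q) \<in> G"
      using grp_add[OF grp] by blast
    have kk: "k = t*h + k mod h" by (simp add: t_def)
    have mm: "m1 = t'*g + m1 mod g" by (simp add: t'_def)
    have "(fst x - fst r, snd x - snd r) = (t * fst \<gamma> + (t'*g)*p, t * snd \<gamma> + (t'*g)*q)"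
    proof -
      have "(fst x - fst r, snd x - snd r) = emb (k - k mod h) (m - m1 mod g)"
        unfolding x r_def by (rule emb_diff)
      also have "k - k mod h = t*h" using kk by simp
      also have "m - m1 mod g = t*m\<gamma> + t'*g" using mm by (simp add: m1_def)
      finally show ?thesis unfolding \<gamma>e by (simp add: emb_def algebra_simps)
    qed
    then have "C x = C r" using in_G C_eq by simp
    then show ?thesis using r by blast
  qed
  then show ?thesis by auto
qed

lemma C_inj: "inj_on C Rs"
proof (rule inj_onI)
  fix x y assume x: "x \<in> Rs" and y: "y \<in> Rs" and eq: "C x = C y"
  obtain k m where km: "x = emb k m" "0 \<le> k" "k < h" "0 \<le> m" "m < g" using x by (auto simp: Rs_def)
  obtain k' m' where km': "y = emb k' m'" "0 \<le> k'" "k' < h" "0 \<le> m'" "m' < g" using y by (auto simp: Rs_def)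
  have d: "emb (k - k') (m - m') \<in> G" using eq C_eq emb_diff km(1) km'(1) by simp
  then have "h dvd (k - k')" using h_dvd kf_emb by blast
  then have kk: "k = k'" using km km' dvd_small[of h "k - k'"] by simp
  then have "((m - m')*p, (m - m')*q) \<in> G" using d emb0 by simp
  then have "g dvd (m - m')" using g_dvd by blast
  then have "m = m'" using km km' dvd_small[of g "m - m'"] by simp
  then show "x = y" using kk km km' by simp
qed

lemma det_eq: "lattice_det G = nat g * nat h"
proof -
  have "lattice_det G = card (range C)" by (simp add: lattice_det_def C_def)
  also have "\<dots> = card Rs" using C_image C_inj card_image by metis
  finally show ?thesis using card_Rs by simp
qed

end


lemma conv_count:
  fixes S :: "int set" and a s :: int
  assumes fin: "finite S" and cv: "\<And>x y z. x \<in> S \<Longrightarrow> y \<in> S \<Longrightarrow> x \<le> z \<Longrightarrow> z \<le> y \<Longrightarrow> z \<in> S"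
    and s: "s > 0"
  shows "\<bar>real (card {i. a + i * s \<in> S}) - real (card S) / real_of_int s\<bar> \<le> 1"
proof (cases "S = {}")
  case True then show ?thesis by simp
next
  case False
  define lo where "lo = Min S"
  define hi where "hi = Max S"
  have lohi: "lo \<in> S" "hi \<in> S" "lo \<le> hi" using fin False by (auto simp: lo_def hi_def)
  have S: "S = {lo..hi}"
  proof
    show "S \<subseteq> {lo..hi}" using fin by (auto simp: lo_def hi_def)
    show "{lo..hi} \<subseteq> S" using cv[OF lohi(1) lohi(2)] by auto
  qed
  have eq: "{i. a + i * s \<in> S} = {i. real_of_int lo \<le> real_of_int a + real_of_int i * real_of_int s \<and>
      real_of_int a + real_of_int i * real_of_int s < real_of_int hi + 1}"
  proof -
    have "a + i * s \<in> S \<longleftrightarrow> (real_of_int lo \<le> real_of_int a + real_of_int i * real_of_int s \<and>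
      real_of_int a + real_of_int i * real_of_int s < real_of_int hi + 1)" for i
    proof -
      have "a + i * s \<in> S \<longleftrightarrow> lo \<le> a + i * s \<and> a + i * s < hi + 1" using S by auto
      also have "\<dots> \<longleftrightarrow> (real_of_int lo \<le> real_of_int (a + i * s) \<and> real_of_int (a + i * s) < real_of_int (hi + 1))"
        by linarith
      finally show ?thesis by simp
    qed
    then show ?thesis by blast
  qed
  have cS: "real (card S) = real_of_int hi + 1 - real_of_int lo" using S lohi by simp
  have s': "real_of_int s > 0" using s by simp
  have l: "lo \<le> hi + 1" using lohi by simp
  show ?thesis using count_hop[OF s', of "real_of_int lo" "real_of_int hi + 1" "real_of_int a"] lohi
    unfolding eq cS by (auto simp: abs_le_iff)
qed

lemma card_sum_swap:
  assumes "finite A" "finite B" "\<And>a. a \<in> A \<Longrightarrow> P a \<subseteq> B"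
  shows "(\<Sum>a\<in>A. card (P a)) = (\<Sum>b\<in>B. card {a\<in>A. b \<in> P a})"
proof -
  have "(\<Sum>a\<in>A. card (P a)) = (\<Sum>a\<in>A. \<Sum>b\<in>B. if b \<in> P a then 1 else 0)"
  proof (rule sum.cong)
    fix a assume a: "a \<in> A"
    have "{b \<in> B. b \<in> P a} = P a" using assms(3)[OF a] by blast
    then have "card (P a) = card {b \<in> B. b \<in> P a}" by simp
    also have "\<dots> = (\<Sum>b\<in>B. if b \<in> P a then 1 else 0)" using assms(2) by (simp add: sum.If_cases Int_def)
    finally show "card (P a) = (\<Sum>b\<in>B. if b \<in> P a then 1 else 0)" .
  qed simp
  also have "\<dots> = (\<Sum>b\<in>B. \<Sum>a\<in>A. if b \<in> P a then 1 else 0)" by (rule sum.swap)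
  also have "\<dots> = (\<Sum>b\<in>B. card {a\<in>A. b \<in> P a})" using assms(1) by (simp add: sum.If_cases Int_def)
  finally show ?thesis .
qed

lemma gauss_int: "n \<ge> 0 \<Longrightarrow> (\<Sum>v\<in>{1..n::int}. real_of_int v) = real_of_int n * (real_of_int n + 1) / 2"
proof (induction n rule: int_ge_induct)
  case base then show ?case by simp
next
  case (step i)
  have "{1..i+1} = insert (i+1) {1..i}" using step.hyps by auto
  then have "(\<Sum>v\<in>{1..i+1}. real_of_int v) = real_of_int (i+1) + (\<Sum>v\<in>{1..i}. real_of_int v)" by simp
  then show ?case using step by (simp add: field_simps)
qed


definition Tset :: "real \<Rightarrow> real \<Rightarrow> real \<Rightarrow> (int \<times> int) set" where
  "Tset \<alpha> \<delta> N = {x. 0 < snd x \<and> real_of_int (snd x) \<le> N \<and>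
     0 < real_of_int (fst x) - \<alpha> * real_of_int (snd x) \<and>
     real_of_int (fst x) - \<alpha> * real_of_int (snd x) \<le> \<delta> * real_of_int (snd x)}"

lemma Tset_finite: "finite (Tset \<alpha> \<delta> N)"
proof -
  define B' where "B' = \<lceil>\<bar>\<alpha>\<bar> * \<bar>N\<bar> + \<bar>\<delta>\<bar> * \<bar>N\<bar>\<rceil>"
  have "Tset \<alpha> \<delta> N \<subseteq> {-B'..B'} \<times> {0..\<lceil>N\<rceil>}"
  proof
    fix x assume x: "x \<in> Tset \<alpha> \<delta> N"
    obtain u v where uv: "x = (u,v)" by (cases x)
    have v: "0 < v" "real_of_int v \<le> N" and u: "\<alpha> * v < u" "u \<le> \<alpha> * v + \<delta> * v"
      using x uv by (auto simp: Tset_def)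
    have "\<bar>\<alpha> * v\<bar> \<le> \<bar>\<alpha>\<bar> * \<bar>N\<bar>" using v by (simp add: abs_mult mult_left_mono)
    moreover have "\<bar>\<delta> * v\<bar> \<le> \<bar>\<delta>\<bar> * \<bar>N\<bar>" using v by (simp add: abs_mult mult_left_mono)
    ultimately have "\<bar>real_of_int u\<bar> \<le> \<bar>\<alpha>\<bar> * \<bar>N\<bar> + \<bar>\<delta>\<bar> * \<bar>N\<bar>" using u by (simp add: abs_le_iff) linarith?
    then have "\<bar>u\<bar> \<le> B'" unfolding B'_def by linarith
    moreover have "v \<le> \<lceil>N\<rceil>" using v by linarith
    ultimately show "x \<in> {-B'..B'} \<times> {0..\<lceil>N\<rceil>}" using uv v by auto
  qed
  then show ?thesis by (rule finite_subset) simp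
qed

lemma lin_max: "(x::real) \<le> z \<Longrightarrow> z \<le> y \<Longrightarrow> z * c \<le> max (x * c) (y * c)"
  by (cases "c \<ge> 0") (auto intro: mult_right_mono mult_right_mono_neg simp: max_def)

lemma lin_min: "(x::real) \<le> z \<Longrightarrow> z \<le> y \<Longrightarrow> z * c \<ge> min (x * c) (y * c)"
  by (cases "c \<ge> 0") (auto intro: mult_right_mono mult_right_mono_neg simp: min_def)

locale tri = lat +
  fixes d :: nat and \<alpha> \<delta> N R :: real
  assumes d1: "d \<ge> 1" and Gd: "\<And>x. x \<in> G \<Longrightarrow> int d dvd fst x \<and> int d dvd snd x"
    and qpos: "q > 0" and \<delta>pos: "\<delta> > 0" and Npos: "N > 0"
    and Rb: "\<bar>real_of_int p - \<alpha> * real_of_int q\<bar> * N + real_of_int q * \<delta> * N \<le> R"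
begin

definition eta where "eta = real_of_int p - \<alpha> * real_of_int q"

lemma d_dvd_g: "int d dvd g"
proof -
  have "(g*p, g*q) \<in> G" using g_dvd by simp
  then have "int d dvd g*p" "int d dvd g*q" using Gd by auto
  then have "int d dvd (g*p)*e2 - (g*q)*e1" by simp
  also have "(g*p)*e2 - (g*q)*e1 = g * (p*e2 - q*e1)" by (simp add: algebra_simps)
  finally show ?thesis using det1 by simp
qed

lemma d_dvd_h: "int d dvd h"
proof -
  obtain x where x: "x \<in> G" "kf x = h" using h_dvd[of h] by auto
  then have "int d dvd snd x * p - fst x * q" using Gd[OF x(1)] by simp
  then show ?thesis using x by (simp add: kf_def)
qed

lemma d_le_g: "real d \<le> real_of_int g"
  using d_dvd_g g_pos zdvd_imp_le by fastforce

lemma d_le_h: "real d \<le> real_of_int h"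
  using d_dvd_h h_pos zdvd_imp_le by fastforce

lemma key_id: "real_of_int q * (real_of_int (fst x) - \<alpha> * real_of_int (snd x)) =
    real_of_int (snd x) * eta - real_of_int (kf x)"
  by (simp add: kf_def eta_def algebra_simps)

definition Ik :: "int \<Rightarrow> int set" where
  "Ik k = {v. 0 < v \<and> real_of_int v \<le> N \<and>
     real_of_int v * eta - real_of_int q * \<delta> * real_of_int v \<le> real_of_int k \<and>
     real_of_int k < real_of_int v * eta}"

lemma tset_iff: "x \<in> Tset \<alpha> \<delta> N \<longleftrightarrow> snd x \<in> Ik (kf x)"
proof -
  define \<phi> where "\<phi> = real_of_int (fst x) - \<alpha> * real_of_int (snd x)"
  have q: "real_of_int q > 0" using qpos by simp
  have k: "real_of_int q * \<phi> = real_of_int (snd x) * eta - real_of_int (kf x)"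
    unfolding \<phi>_def by (rule key_id)
  have "0 < \<phi> \<longleftrightarrow> 0 < real_of_int q * \<phi>" using q by (simp add: zero_less_mult_iff)
  moreover have "\<phi> \<le> \<delta> * real_of_int (snd x) \<longleftrightarrow> real_of_int q * \<phi> \<le> real_of_int q * (\<delta> * real_of_int (snd x))"
    using q by simp
  ultimately show ?thesis unfolding Tset_def Ik_def using k \<phi>_def by (auto simp: algebra_simps)
qed

lemma k_bound: "v \<in> Ik k \<Longrightarrow> - R \<le> real_of_int k \<and> real_of_int k \<le> R"
proof -
  assume v: "v \<in> Ik k"
  have v0: "0 < real_of_int v" "real_of_int v \<le> N" using v by (auto simp: Ik_def)
  have a: "\<bar>real_of_int v * eta\<bar> \<le> \<bar>eta\<bar> * N" using v0 by (simp add: abs_mult mult_right_mono mult.commute)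
  have b: "real_of_int q * \<delta> * real_of_int v \<le> real_of_int q * \<delta> * N"
    using v0 qpos \<delta>pos by (intro mult_left_mono) auto
  have c: "0 \<le> real_of_int q * \<delta> * real_of_int v" using v0 qpos \<delta>pos by simp
  have "\<bar>eta\<bar> * N + real_of_int q * \<delta> * N \<le> R" using Rb by (simp add: eta_def)
  then show ?thesis using v a b c by (auto simp: Ik_def abs_le_iff)
qed

lemma Ik_sub: "Ik k \<subseteq> {1..\<lfloor>N\<rfloor>}"
  by (auto simp: Ik_def le_floor_iff)

lemma Ik_fin: "finite (Ik k)"
  using Ik_sub by (rule finite_subset) simp

lemma Ik_conv: "x \<in> Ik k \<Longrightarrow> y \<in> Ik k \<Longrightarrow> x \<le> z \<Longrightarrow> z \<le> y \<Longrightarrow> z \<in> Ik k"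
proof -
  assume x: "x \<in> Ik k" and y: "y \<in> Ik k" and xz: "x \<le> z" and zy: "z \<le> y"
  have xz': "real_of_int x \<le> real_of_int z" and zy': "real_of_int z \<le> real_of_int y" using xz zy by simp_all
  have a: "real_of_int z * (eta - real_of_int q * \<delta>) \<le> max (real_of_int x * (eta - real_of_int q * \<delta>)) (real_of_int y * (eta - real_of_int q * \<delta>))"
    using lin_max[OF xz' zy'] .
  have b: "real_of_int z * eta \<ge> min (real_of_int x * eta) (real_of_int y * eta)"
    using lin_min[OF xz' zy'] .
  have e: "real_of_int t * eta - real_of_int q * \<delta> * real_of_int t = real_of_int t * (eta - real_of_int q * \<delta>)" for t
    by (simp add: algebra_simps)
  show ?thesis using x y xz zy a b unfolding Ik_def e by (auto simp: max_def min_def split: if_splits)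
qed

definition J0 where "J0 = {j::int. - R \<le> real_of_int j * real_of_int h \<and> real_of_int j * real_of_int h < R + 1}"

lemma R_nonneg: "R \<ge> 0"
proof -
  have "0 \<le> \<bar>real_of_int p - \<alpha> * real_of_int q\<bar> * N + real_of_int q * \<delta> * N"
    using qpos \<delta>pos Npos by simp
  then show ?thesis using Rb by linarith
qed

lemma J0_card: "real (card J0) \<le> (2*R + 1) / real_of_int h + 1"
proof -
  have "real (card {j. - R \<le> 0 + real_of_int j * real_of_int h \<and> 0 + real_of_int j * real_of_int h < R + 1})
     \<le> (R + 1 - - R) / real_of_int h + 1"
    using count_hop(2)[of "real_of_int h" "-R" "R+1" 0] h_pos R_nonneg by simp
  then show ?thesis by (simp add: J0_def)
qed

lemma J0_fin: "finite J0"
proof -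
  have "J0 \<subseteq> {-\<lceil>R\<rceil>-1..\<lceil>R\<rceil>+1}"
  proof
    fix j assume j: "j \<in> J0"
    have h1: "real_of_int h \<ge> 1" using h_pos by simp
    have "\<bar>real_of_int j\<bar> * 1 \<le> \<bar>real_of_int j\<bar> * \<bar>real_of_int h\<bar>" using h1
      by (intro mult_left_mono) auto
    then have "\<bar>real_of_int j\<bar> \<le> \<bar>real_of_int j * real_of_int h\<bar>" by (simp add: abs_mult)
    also have "\<dots> \<le> R + 1" using j by (auto simp: J0_def abs_le_iff)
    finally have jr: "\<bar>real_of_int j\<bar> \<le> R + 1" .
    have rc: "R \<le> real_of_int \<lceil>R\<rceil>" by (rule le_of_int_ceiling)
    have j1: "real_of_int j \<le> R + 1" "- R - 1 \<le> real_of_int j" using jr by (simp_all add: abs_le_iff)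
    have "real_of_int j \<le> real_of_int \<lceil>R\<rceil> + 1" "- real_of_int \<lceil>R\<rceil> - 1 \<le> real_of_int j"
      using j1 rc by linarith+
    then have "real_of_int j \<le> real_of_int (\<lceil>R\<rceil>+1)" "real_of_int (-\<lceil>R\<rceil>-1) \<le> real_of_int j"
      by simp_all
    then show "j \<in> {-\<lceil>R\<rceil>-1..\<lceil>R\<rceil>+1}" by (simp only: of_int_le_iff atLeastAtMost_iff)
  qed
  then show ?thesis by (rule finite_subset) simp
qed

definition F where "F j = {x \<in> G \<inter> Tset \<alpha> \<delta> N. kf x = j * h}"

lemma union_F: "G \<inter> Tset \<alpha> \<delta> N = (\<Union>j\<in>J0. F j)"
proof
  show "(\<Union>j\<in>J0. F j) \<subseteq> G \<inter> Tset \<alpha> \<delta> N" by (auto simp: F_def)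
  show "G \<inter> Tset \<alpha> \<delta> N \<subseteq> (\<Union>j\<in>J0. F j)"
  proof
    fix x assume x: "x \<in> G \<inter> Tset \<alpha> \<delta> N"
    then have "h dvd kf x" using h_dvd by blast
    then obtain j where j: "kf x = j * h" by (metis dvd_def mult.commute)
    have "snd x \<in> Ik (kf x)" using x tset_iff by blast
    then have "- R \<le> real_of_int (kf x) \<and> real_of_int (kf x) \<le> R" by (rule k_bound)
    then have "j \<in> J0" using j by (auto simp: J0_def)
    then show "x \<in> (\<Union>j\<in>J0. F j)" using x j by (auto simp: F_def)
  qed
qed

lemma card_union: "card (G \<inter> Tset \<alpha> \<delta> N) = (\<Sum>j\<in>J0. card (F j))"
proof -
  have "card (\<Union>j\<in>J0. F j) = (\<Sum>j\<in>J0. card (F j))"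
  proof (rule card_UN_disjoint[OF J0_fin])
    show "\<forall>i\<in>J0. finite (F i)" using Tset_finite by (auto simp: F_def)
    show "\<forall>i\<in>J0. \<forall>j\<in>J0. i \<noteq> j \<longrightarrow> F i \<inter> F j = {}" using h_pos by (auto simp: F_def)
  qed
  then show ?thesis using union_F by simp
qed

lemma card_F: "card (F j) = card {i. snd \<gamma> + i * (g*q) \<in> Ik (j*h)}" if \<gamma>: "\<gamma> \<in> G" "kf \<gamma> = j * h" for j \<gamma>
proof -
  define f where "f i = (fst \<gamma> + i*g*p, snd \<gamma> + i*g*q)" for i
  have kff: "kf (f i) = j * h" for i using \<gamma> by (simp add: f_def kf_def algebra_simps)
  have fG: "f i \<in> G" for i
  proof -
    have "((i*g)*p, (i*g)*q) \<in> G" using g_dvd[of "i*g"] by simp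
    then have "(fst \<gamma> + (i*g)*p, snd \<gamma> + (i*g)*q) \<in> G"
      using grp_add[OF grp, of "fst \<gamma>" "snd \<gamma>"] \<gamma> by simp
    then show ?thesis by (simp add: f_def mult.assoc)
  qed
  have sndf: "snd (f i) = snd \<gamma> + i * (g*q)" for i by (simp add: f_def algebra_simps)
  have inj: "inj f"
  proof (rule injI)
    fix i i' assume "f i = f i'"
    then have "i * (g*q) = i' * (g*q)" using sndf by (metis add_left_cancel)
    then show "i = i'" using g_pos qpos by simp
  qed
  have "F j = f ` {i. snd \<gamma> + i * (g*q) \<in> Ik (j*h)}"
  proof
    show "f ` {i. snd \<gamma> + i * (g*q) \<in> Ik (j*h)} \<subseteq> F j"
    proof
      fix x assume "x \<in> f ` {i. snd \<gamma> + i * (g*q) \<in> Ik (j*h)}"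
      then obtain i where i: "x = f i" "snd \<gamma> + i * (g*q) \<in> Ik (j*h)" by auto
      have "x \<in> Tset \<alpha> \<delta> N" using i tset_iff[of x] kff sndf by simp
      then show "x \<in> F j" using i fG kff by (simp add: F_def)
    qed
    show "F j \<subseteq> f ` {i. snd \<gamma> + i * (g*q) \<in> Ik (j*h)}"
    proof
      fix x assume x: "x \<in> F j"
      define y where "y = (fst x - fst \<gamma>, snd x - snd \<gamma>)"
      have yG: "y \<in> G" using grp \<gamma>(1) x unfolding y_def F_def grp_def by blast
      have ky: "kf y = 0" using x \<gamma> by (simp add: y_def F_def kf_def algebra_simps)
      have "y = emb (kf y) (mf y)" by (simp add: emb_inv)
      also have "\<dots> = (mf y * p, mf y * q)" using ky by (simp add: emb0)
      finally have ye: "y = (mf y * p, mf y * q)" .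
      then have "g dvd mf y" using yG g_dvd by metis
      then obtain i where i: "mf y = g * i" by (auto elim: dvdE)
      have xf: "x = f i" using ye i unfolding y_def f_def by (auto simp: prod_eq_iff algebra_simps)
      have "snd x \<in> Ik (kf x)" using x tset_iff by (auto simp: F_def)
      then have "snd \<gamma> + i * (g*q) \<in> Ik (j*h)" using xf sndf kff by metis
      then show "x \<in> f ` {i. snd \<gamma> + i * (g*q) \<in> Ik (j*h)}" using xf by blast
    qed
  qed
  then show ?thesis using inj by (simp add: card_image inj_on_subset)
qed

lemma F_est: "\<bar>real (card (F j)) - real (card (Ik (j*h))) / (real_of_int g * real_of_int q)\<bar> \<le> 1"
proof -
  obtain \<gamma> where \<gamma>: "\<gamma> \<in> G" "kf \<gamma> = j * h" using h_dvd[of "j*h"] by auto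
  have "\<bar>real (card {i. snd \<gamma> + i * (g*q) \<in> Ik (j*h)}) - real (card (Ik (j*h))) / real_of_int (g*q)\<bar> \<le> 1"
  proof -
    have pos: "g*q > 0" using g_pos qpos by simp
    show ?thesis by (rule conv_count[OF Ik_fin[of "j*h"] Ik_conv pos])
  qed
  then show ?thesis using card_F[OF \<gamma>] by (simp only: of_int_mult)
qed

lemma v_count:
  assumes v: "v \<in> {1..\<lfloor>N\<rfloor>}"
  shows "\<bar>real (card {j\<in>J0. v \<in> Ik (j*h)}) - real_of_int q * \<delta> * real_of_int v / real_of_int h\<bar> \<le> 1"
proof -
  have vN: "0 < v" "real_of_int v \<le> N" using v by (auto simp: le_floor_iff)
  have eq: "{j\<in>J0. v \<in> Ik (j*h)} = {j. real_of_int v * eta - real_of_int q * \<delta> * real_of_int v \<le> 0 + real_of_int j * real_of_int h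
        \<and> 0 + real_of_int j * real_of_int h < real_of_int v * eta}"
  proof (rule set_eqI, rule iffI)
    fix j assume "j \<in> {j\<in>J0. v \<in> Ik (j*h)}"
    then show "j \<in> {j. real_of_int v * eta - real_of_int q * \<delta> * real_of_int v \<le> 0 + real_of_int j * real_of_int h
        \<and> 0 + real_of_int j * real_of_int h < real_of_int v * eta}" by (auto simp: Ik_def)
  next
    fix j assume j: "j \<in> {j. real_of_int v * eta - real_of_int q * \<delta> * real_of_int v \<le> 0 + real_of_int j * real_of_int h
        \<and> 0 + real_of_int j * real_of_int h < real_of_int v * eta}"
    then have vi: "v \<in> Ik (j*h)" using vN by (auto simp: Ik_def)
    then have "j \<in> J0" using k_bound[OF vi] by (auto simp: J0_def)
    then show "j \<in> {j\<in>J0. v \<in> Ik (j*h)}" using vi by simp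
  qed
  have le: "real_of_int v * eta - real_of_int q * \<delta> * real_of_int v \<le> real_of_int v * eta"
    using vN qpos \<delta>pos by simp
  have h0: "real_of_int h > 0" using h_pos by simp
  have de: "real_of_int v * eta - (real_of_int v * eta - real_of_int q * \<delta> * real_of_int v) = real_of_int q * \<delta> * real_of_int v"
    by simp
  have c1: "real (card {j. real_of_int v * eta - real_of_int q * \<delta> * real_of_int v \<le> 0 + real_of_int j * real_of_int h
        \<and> 0 + real_of_int j * real_of_int h < real_of_int v * eta}) \<ge> real_of_int q * \<delta> * real_of_int v / real_of_int h - 1"
    using count_hop(1)[OF h0 le, of 0] unfolding de .
  have c2: "real (card {j. real_of_int v * eta - real_of_int q * \<delta> * real_of_int v \<le> 0 + real_of_int j * real_of_int h
        \<and> 0 + real_of_int j * real_of_int h < real_of_int v * eta}) \<le> real_of_int q * \<delta> * real_of_int v / real_of_int h + 1"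
    using count_hop(2)[OF h0 le, of 0] unfolding de .
  show ?thesis unfolding eq using c1 c2 by linarith
qed

end


lemma floor_sq:
  fixes N :: real assumes N: "N > 0"
  shows "\<bar>real_of_int \<lfloor>N\<rfloor> * (real_of_int \<lfloor>N\<rfloor> + 1) - N^2\<bar> \<le> N"
proof -
  define n where "n = real_of_int \<lfloor>N\<rfloor>"
  have n1: "n \<le> N" "N < n + 1" "0 \<le> n" using N by (auto simp: n_def)
  have up: "n * (n + 1) \<le> N * (N + 1)" using n1 by (intro mult_mono) auto
  have lo: "n * (n + 1) \<ge> (N - 1) * N"
  proof (cases "N \<ge> 1")
    case True
    then show ?thesis using n1 by (intro mult_mono) auto
  next
    case False
    then have "(N - 1) * N \<le> 0" using N by (simp add: mult_nonpos_nonneg)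
    moreover have "n * (n+1) \<ge> 0" using n1 by simp
    ultimately show ?thesis by linarith
  qed
  show ?thesis using up lo unfolding n_def[symmetric] by (simp add: abs_le_iff power2_eq_square algebra_simps)
qed

context tri
begin

theorem count_main:
  "\<bar>real (card (G \<inter> Tset \<alpha> \<delta> N)) - \<delta> * N^2 / (2 * real_of_int g * real_of_int h)\<bar>
     \<le> (2*R + 1) / real_of_int h + 1 + N / (real_of_int g * real_of_int q) + \<delta> * N / (real_of_int g * real_of_int h)"
proof -
  define V where "V = {1..\<lfloor>N\<rfloor>}"
  define gq where "gq = real_of_int g * real_of_int q"
  have gq: "gq > 0" using g_pos qpos by (simp add: gq_def)
  have h0: "real_of_int h > 0" using h_pos by simp
  have g0: "real_of_int g > 0" using g_pos by simp
  define X where "X = (\<Sum>j\<in>J0. real (card (Ik (j*h))))"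
  define Y where "Y = (\<Sum>v\<in>V. real_of_int q * \<delta> * real_of_int v / real_of_int h)"
  have S1: "\<bar>real (card (G \<inter> Tset \<alpha> \<delta> N)) - X / gq\<bar> \<le> real (card J0)"
  proof -
    have "real (card (G \<inter> Tset \<alpha> \<delta> N)) - X / gq = (\<Sum>j\<in>J0. real (card (F j)) - real (card (Ik (j*h))) / gq)"
      by (simp add: card_union X_def sum_subtractf sum_divide_distrib)
    also have "\<bar>\<dots>\<bar> \<le> (\<Sum>j\<in>J0. \<bar>real (card (F j)) - real (card (Ik (j*h))) / gq\<bar>)" by (rule sum_abs)
    also have "\<dots> \<le> (\<Sum>j\<in>J0. 1)" by (rule sum_mono) (use F_est in \<open>simp add: gq_def\<close>)
    finally show ?thesis by simp
  qed
  have XV: "X = (\<Sum>v\<in>V. real (card {j\<in>J0. v \<in> Ik (j*h)}))"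
  proof -
    have "(\<Sum>j\<in>J0. card (Ik (j*h))) = (\<Sum>v\<in>V. card {j\<in>J0. v \<in> Ik (j*h)})"
      by (rule card_sum_swap[OF J0_fin]) (simp_all add: V_def Ik_sub)
    then have "real (\<Sum>j\<in>J0. card (Ik (j*h))) = real (\<Sum>v\<in>V. card {j\<in>J0. v \<in> Ik (j*h)})" by simp
    then show ?thesis unfolding X_def by simp
  qed
  have XY: "\<bar>X - Y\<bar> \<le> real (card V)"
  proof -
    define f where "f v = real (card {j\<in>J0. v \<in> Ik (j*h)}) - real_of_int q * \<delta> * real_of_int v / real_of_int h" for v
    have e: "X - Y = (\<Sum>v\<in>V. f v)"
      by (simp add: XV Y_def sum_subtractf f_def)
    have a: "\<bar>\<Sum>v\<in>V. f v\<bar> \<le> (\<Sum>v\<in>V. \<bar>f v\<bar>)" by (rule sum_abs)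
    have b: "(\<Sum>v\<in>V. \<bar>f v\<bar>) \<le> (\<Sum>v\<in>V. 1)"
    proof (rule sum_mono)
      fix v assume v: "v \<in> V"
      have v': "v \<in> {1..\<lfloor>N\<rfloor>}" using v unfolding V_def .
      show "\<bar>f v\<bar> \<le> 1" unfolding f_def by (rule v_count[OF v'])
    qed
    have "(\<Sum>v\<in>V. (1::real)) = real (card V)" by simp
    then show ?thesis using a b unfolding e by linarith
  qed
  have cV: "real (card V) \<le> N"
  proof -
    have "real (card V) = real (nat \<lfloor>N\<rfloor>)" by (simp add: V_def)
    also have "\<dots> \<le> N" using Npos by linarith
    finally show ?thesis .
  qed
  have Ysum: "Y = real_of_int q * \<delta> / real_of_int h * (real_of_int \<lfloor>N\<rfloor> * (real_of_int \<lfloor>N\<rfloor> + 1) / 2)"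
  proof -
    have "Y = real_of_int q * \<delta> / real_of_int h * (\<Sum>v\<in>V. real_of_int v)"
      by (simp add: Y_def sum_distrib_left)
    also have "(\<Sum>v\<in>V. real_of_int v) = real_of_int \<lfloor>N\<rfloor> * (real_of_int \<lfloor>N\<rfloor> + 1) / 2"
      unfolding V_def by (rule gauss_int) (use Npos in simp)
    finally show ?thesis .
  qed
  have YN: "Y / gq = \<delta> * (real_of_int \<lfloor>N\<rfloor> * (real_of_int \<lfloor>N\<rfloor> + 1)) / (2 * real_of_int g * real_of_int h)"
    using qpos g0 h0 by (simp add: Ysum gq_def field_simps)
  have fl: "\<bar>\<delta> * (real_of_int \<lfloor>N\<rfloor> * (real_of_int \<lfloor>N\<rfloor> + 1)) / (2 * real_of_int g * real_of_int h)
       - \<delta> * N^2 / (2 * real_of_int g * real_of_int h)\<bar> \<le> \<delta> * N / (real_of_int g * real_of_int h)"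
  proof -
    have "\<bar>\<delta> * (real_of_int \<lfloor>N\<rfloor> * (real_of_int \<lfloor>N\<rfloor> + 1)) / (2 * real_of_int g * real_of_int h)
       - \<delta> * N^2 / (2 * real_of_int g * real_of_int h)\<bar>
       = \<delta> * \<bar>real_of_int \<lfloor>N\<rfloor> * (real_of_int \<lfloor>N\<rfloor> + 1) - N^2\<bar> / (2 * real_of_int g * real_of_int h)"
      using \<delta>pos g0 h0 by (simp add: abs_mult abs_divide diff_divide_distrib[symmetric] right_diff_distrib[symmetric])
    also have "\<dots> \<le> \<delta> * N / (2 * real_of_int g * real_of_int h)"
      using floor_sq[OF Npos] \<delta>pos g0 h0 by (intro divide_right_mono mult_left_mono) auto
    also have "\<dots> \<le> \<delta> * N / (real_of_int g * real_of_int h)"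
      using \<delta>pos g0 h0 Npos by (simp add: field_simps)
    finally show ?thesis .
  qed
  have "\<bar>X / gq - Y / gq\<bar> \<le> N / gq"
  proof -
    have "\<bar>X / gq - Y / gq\<bar> = \<bar>X - Y\<bar> / gq" using gq by (simp add: diff_divide_distrib[symmetric] abs_divide)
    also have "\<dots> \<le> N / gq" using XY cV gq by (intro divide_right_mono) auto
    finally show ?thesis .
  qed
  then show ?thesis using S1 J0_card fl YN unfolding gq_def by linarith
qed

end


lemma dioph:
  fixes a b :: nat and u v :: int
  assumes a: "0 < a" and irr: "sqrt (real b / real a) \<notin> \<rat>" and v: "v \<ge> 1"
  shows "\<bar>real_of_int u - sqrt (real b / real a) * real_of_int v\<bar> \<ge>
           1 / (real a * (1 + 2 * sqrt (real b / real a))) / real_of_int v"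
proof -
  define \<alpha> where "\<alpha> = sqrt (real b / real a)"
  have \<alpha>0: "\<alpha> \<ge> 0" by (simp add: \<alpha>_def)
  have \<alpha>2: "\<alpha> * \<alpha> = real b / real a" by (simp add: \<alpha>_def)
  have v0: "real_of_int v \<ge> 1" using v by simp
  have ne: "a * u^2 - b * v^2 \<noteq> 0"
  proof
    assume "a * u^2 - b * v^2 = 0"
    then have "real a * (real_of_int u)^2 = real b * (real_of_int v)^2"
      by (metis (mono_tags, opaque_lifting) eq_iff_diff_eq_0 of_int_eq_iff of_int_mult of_int_of_nat_eq of_int_power)
    then have "real b / real a = (real_of_int u / real_of_int v)^2"
      using a v0 by (simp add: field_simps)
    then have "\<alpha> = \<bar>real_of_int u / real_of_int v\<bar>" by (simp add: \<alpha>_def)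
    also have "\<dots> \<in> \<rat>" by simp
    finally show False using irr \<alpha>_def by simp
  qed
  then have one: "1 \<le> \<bar>real a * (real_of_int u)^2 - real b * (real_of_int v)^2\<bar>"
  proof -
    have "1 \<le> \<bar>a * u^2 - b * v^2\<bar>" using ne by linarith
    then have "real_of_int 1 \<le> real_of_int \<bar>a * u^2 - b * v^2\<bar>" by (simp only: of_int_le_iff)
    then show ?thesis by simp
  qed
  define \<phi> where "\<phi> = real_of_int u - \<alpha> * real_of_int v"
  define \<psi> where "\<psi> = real_of_int u + \<alpha> * real_of_int v"
  have prod: "real a * (real_of_int u)^2 - real b * (real_of_int v)^2 = real a * \<phi> * \<psi>"
  proof -
    have "real a * \<phi> * \<psi> = real a * ((real_of_int u)^2 - (\<alpha> * \<alpha>) * (real_of_int v)^2)"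
      by (simp add: \<phi>_def \<psi>_def algebra_simps power2_eq_square)
    also have "\<dots> = real a * (real_of_int u)^2 - real b * (real_of_int v)^2"
      using a by (simp add: \<alpha>2 algebra_simps)
    finally show ?thesis by simp
  qed
  have den: "1 \<le> real a * (1 + 2 * \<alpha>)"
    using mult_mono[of 1 "real a" 1 "1 + 2 * \<alpha>"] a \<alpha>0 by simp
  have c1: "1 / (real a * (1 + 2 * \<alpha>)) \<le> 1"
    using den by simp
  have main: "1 / (real a * (1 + 2 * \<alpha>)) / real_of_int v \<le> \<bar>\<phi>\<bar>"
  proof (cases "\<bar>\<phi>\<bar> \<ge> 1")
    case True
    have "1 / (real a * (1 + 2 * \<alpha>)) / real_of_int v \<le> 1 / (real a * (1 + 2 * \<alpha>)) / 1"
      using v0 den by (intro divide_left_mono) auto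
    then show ?thesis using True c1 by linarith
  next
    case False
    have pe: "\<psi> = \<phi> + 2 * \<alpha> * real_of_int v" by (simp add: \<phi>_def \<psi>_def)
    have "\<bar>2 * \<alpha> * real_of_int v\<bar> = 2 * \<alpha> * real_of_int v" using \<alpha>0 v0 by simp
    then have "\<bar>\<psi>\<bar> \<le> \<bar>\<phi>\<bar> + 2 * \<alpha> * real_of_int v"
      unfolding pe using abs_triangle_ineq[of \<phi> "2 * \<alpha> * real_of_int v"] by linarith
    also have "\<dots> \<le> (1 + 2 * \<alpha>) * real_of_int v" using False v0 \<alpha>0 by (simp add: algebra_simps)
    finally have ps: "\<bar>\<psi>\<bar> \<le> (1 + 2 * \<alpha>) * real_of_int v" .
    have "1 \<le> real a * \<bar>\<phi>\<bar> * \<bar>\<psi>\<bar>" using one prod a by (simp add: abs_mult)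
    also have "\<dots> \<le> real a * \<bar>\<phi>\<bar> * ((1 + 2 * \<alpha>) * real_of_int v)"
      using ps a by (intro mult_left_mono) auto
    finally have "1 \<le> \<bar>\<phi>\<bar> * (real a * (1 + 2 * \<alpha>) * real_of_int v)" by (simp add: algebra_simps)
    moreover have "real a * (1 + 2 * \<alpha>) * real_of_int v > 0" using a \<alpha>0 v0 by simp
    ultimately show ?thesis by (simp add: divide_le_eq field_simps)
  qed
  then show ?thesis by (simp add: \<alpha>_def \<phi>_def)
qed

lemma harm_bound1: "m \<ge> 1 \<Longrightarrow> (\<Sum>n<m. 1 / real (Suc n)) \<le> 1 + ln (real m)"
proof (induction m rule: dec_induct)
  case base then show ?case by simp
next
  case (step m)
  have m: "real m \<ge> 1" using step by simp
  have "ln (real m / (real m + 1)) \<le> real m / (real m + 1) - 1" using m by (intro ln_le_minus_one) auto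
  also have "\<dots> = - 1 / (real m + 1)" using m by (simp add: field_simps)
  finally have f: "ln (real m) - ln (real m + 1) \<le> - 1 / (real m + 1)" using m by (simp add: ln_div)
  have e: "(\<Sum>n<Suc m. 1 / real (Suc n)) = (\<Sum>n<m. 1 / real (Suc n)) + 1 / (real m + 1)"
    by (simp add: add.commute)
  have e2: "ln (real (Suc m)) = ln (real m + 1)" by (simp add: add.commute)
  show ?case unfolding e e2 using step.IH f by linarith
qed

lemma harm_bound: "(\<Sum>n<m. 1 / real (Suc n)) \<le> 1 + ln (real m + 1)"
proof (cases "m \<ge> 1")
  case True
  have "ln (real m) \<le> ln (real m + 1)" using True by simp
  then show ?thesis using harm_bound1[OF True] by linarith
next
  case False then have "m = 0" by simp
  then show ?thesis by simp
qed

lemma tail_sq: "(\<Sum>n<m. 1 / (real (n + k + 1))^2) \<le> 2 / real (k+1) - 2 / real (m + k + 1)"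
proof (induction m)
  case 0 then show ?case by simp
next
  case (Suc m)
  define x where "x = real (m + k + 1)"
  have x: "x \<ge> 1" by (simp add: x_def)
  have e1: "2 / x - 2 / (x + 1) = (1/x) * (2 / (x+1))" using x by (simp add: field_simps)
  have e2: "1 / x^2 = (1/x) * (1/x)" by (simp add: power2_eq_square)
  have "1/x \<le> 2 / (x+1)" using x by (simp add: field_simps)
  then have "(1/x) * (1/x) \<le> (1/x) * (2 / (x+1))" using x by (intro mult_left_mono) auto
  then have "1 / x^2 \<le> 2 / x - 2 / (x + 1)" unfolding e1 e2 .
  then show ?case using Suc by (simp add: x_def add_ac)
qed

lemma tail_sq2: "(\<Sum>n<m. 1 / (real (n + k + 1))^2) \<le> 2 / real (k+1)"
proof -
  have "0 \<le> 2 / real (m + k + 1)" by simp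
  then show ?thesis using tail_sq[where m=m and k=k] by linarith
qed

lemma tail_sq_summable: "summable (\<lambda>n. 1 / (real (n + k + 1))^2)"
  by (rule summableI_nonneg_bounded[where x = "2 / real (k+1)"]) (simp_all only: tail_sq2, simp)

lemma tail_sq_suminf: "(\<Sum>n. 1 / (real (n + k + 1))^2) \<le> 2 / real (k+1)"
  by (rule suminf_le_const[OF tail_sq_summable]) (rule tail_sq2)

lemma sq_sum_bound: "(\<Sum>n<m. 1 / (real (Suc n))^2) \<le> 2"
  using tail_sq2[where m=m and k=0] by simp

lemma theta_facts:
  fixes f :: "nat \<Rightarrow> real"
  assumes bound: "\<And>n. \<bar>f n\<bar> \<le> 1 / (real (Suc n))^2"
  shows "summable f" and "\<bar>suminf f - (\<Sum>n<k. f n)\<bar> \<le> 2 / real (k+1)"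
proof -
  have s0: "summable (\<lambda>n. 1 / (real (n + 0 + 1))^2)" by (rule tail_sq_summable)
  show sf: "summable f"
    by (rule summable_comparison_test[OF _ s0]) (use bound in auto)
  have "suminf f = (\<Sum>n. f (n + k)) + (\<Sum>n<k. f n)" by (rule suminf_split_initial_segment[OF sf])
  then have e: "suminf f - (\<Sum>n<k. f n) = (\<Sum>n. f (n + k))" by simp
  have sk: "summable (\<lambda>n. 1 / (real (n + k + 1))^2)" by (rule tail_sq_summable)
  have b2: "\<bar>f (n + k)\<bar> \<le> 1 / (real (n + k + 1))^2" for n using bound[of "n+k"] by simp
  have sa: "summable (\<lambda>n. \<bar>f (n + k)\<bar>)"
    by (rule summable_comparison_test[OF _ sk]) (use b2 in auto)
  have "\<bar>\<Sum>n. f (n + k)\<bar> \<le> (\<Sum>n. \<bar>f (n + k)\<bar>)" by (rule summable_rabs[OF sa])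
  also have "\<dots> \<le> (\<Sum>n. 1 / (real (n + k + 1))^2)" by (rule suminf_le[OF b2 sa sk])
  also have "\<dots> \<le> 2 / real (k+1)" by (rule tail_sq_suminf)
  finally show "\<bar>suminf f - (\<Sum>n<k. f n)\<bar> \<le> 2 / real (k+1)" using e by simp
qed


lemma full_lattice_grp:
  assumes "full_lattice L"
  obtains M where "grp L" "M > 0" "(M,0) \<in> L" "(0,M) \<in> L"
proof -
  obtain p q r s :: int where det: "p * s - q * r \<noteq> 0" and L: "L = {(m * p + n * r, m * q + n * s) | m n. True}"
    using assms by (auto simp: full_lattice_def)
  have g: "grp L"
  proof -
    have "(0,0) \<in> L" unfolding L by (auto intro!: exI[of _ 0])
    moreover have "(fst x - fst y, snd x - snd y) \<in> L" if xL: "x \<in> L" and yL: "y \<in> L" for x y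
    proof -
      obtain m n where x: "x = (m * p + n * r, m * q + n * s)" using xL unfolding L by blast
      obtain m' n' where y: "y = (m' * p + n' * r, m' * q + n' * s)" using yL unfolding L by blast
      have "(fst x - fst y, snd x - snd y) = ((m - m') * p + (n - n') * r, (m - m') * q + (n - n') * s)"
        by (simp add: x y algebra_simps)
      then show ?thesis unfolding L by blast
    qed
    ultimately show ?thesis by (simp add: grp_def)
  qed
  define D where "D = p * s - q * r"
  have D1: "(D, 0) \<in> L" unfolding L D_def
    by (rule CollectI, rule exI[of _ s], rule exI[of _ "-q"]) (simp add: algebra_simps)
  have D2: "(0, D) \<in> L" unfolding L D_def
    by (rule CollectI, rule exI[of _ "-r"], rule exI[of _ p]) (simp add: algebra_simps)
  have "(\<bar>D\<bar>, 0) \<in> L \<and> (0, \<bar>D\<bar>) \<in> L"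
  proof (cases "D \<ge> 0")
    case True then show ?thesis using D1 D2 by simp
  next
    case False then show ?thesis using grp_neg[OF g D1] grp_neg[OF g D2] by simp
  qed
  moreover have "\<bar>D\<bar> > 0" using det by (simp add: D_def)
  ultimately show ?thesis using that g by blast
qed

lemma lattice_d_props:
  assumes g: "grp L" and M: "M > 0" "(M,0) \<in> L" "(0,M) \<in> L" and d: "d \<ge> 1"
  shows "grp (lattice_d L d)" "int d * M > 0" "(int d * M, 0) \<in> lattice_d L d" "(0, int d * M) \<in> lattice_d L d"
    "\<And>x. x \<in> lattice_d L d \<Longrightarrow> int d dvd fst x \<and> int d dvd snd x"
proof -
  show "grp (lattice_d L d)"
    using g unfolding grp_def lattice_d_def by auto
  show "int d * M > 0" using M d by simp
  show "(int d * M, 0) \<in> lattice_d L d" using grp_mult[OF g M(2), of "int d"] by (simp add: lattice_d_def)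
  show "(0, int d * M) \<in> lattice_d L d" using grp_mult[OF g M(3), of "int d"] by (simp add: lattice_d_def)
  show "\<And>x. x \<in> lattice_d L d \<Longrightarrow> int d dvd fst x \<and> int d dvd snd x" by (auto simp: lattice_d_def)
qed

lemma det_ge:
  assumes g: "grp L" and M: "M > 0" "(M,0) \<in> L" "(0,M) \<in> L" and d: "d \<ge> 1"
  shows "real (lattice_det (lattice_d L d)) \<ge> real d ^ 2"
proof -
  note P = lattice_d_props[OF g M d]
  interpret tri "lattice_d L d" "int d * M" 1 1 0 1 d 0 1 1 2
    by unfold_locales (use P d in auto)
  have "real (lattice_det (lattice_d L d)) = real_of_int g * real_of_int h"
    using det_eq g_pos h_pos by simp
  moreover have "real d * real d \<le> real_of_int g * real_of_int h"
    using d_le_g d_le_h by (intro mult_mono) auto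
  ultimately show ?thesis by (simp add: power2_eq_square)
qed

lemma per_d:
  assumes g: "grp L" and M: "M > 0" "(M,0) \<in> L" "(0,M) \<in> L" and d: "d \<ge> 1"
    and pq: "p * e2 - q * e1 = 1" "q > 0" and \<delta>: "\<delta> > 0" and N: "N > 0"
    and Rb: "\<bar>real_of_int p - \<alpha> * real_of_int q\<bar> * N + real_of_int q * \<delta> * N \<le> R"
  shows "\<bar>real (card (lattice_d L d \<inter> Tset \<alpha> \<delta> N)) - \<delta> * N^2 / (2 * real (lattice_det (lattice_d L d)))\<bar>
     \<le> (2*R + 1) / real d + 1 + N / (real d * real_of_int q) + \<delta> * N / (real d)^2"
proof -
  note P = lattice_d_props[OF g M d]
  interpret tri "lattice_d L d" "int d * M" p q e1 e2 d \<alpha> \<delta> N R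
    by unfold_locales (use P d pq \<delta> N Rb in auto)
  have det: "real (lattice_det (lattice_d L d)) = real_of_int g * real_of_int h"
    using det_eq g_pos h_pos by simp
  have d0: "real d > 0" using d by simp
  have q0: "real_of_int q > 0" using pq by simp
  have a: "(2*R + 1) / real_of_int h \<le> (2*R + 1) / real d"
    using R_nonneg d_le_h d0 by (intro divide_left_mono) auto
  have b: "N / (real_of_int g * real_of_int q) \<le> N / (real d * real_of_int q)"
    using d_le_g d0 q0 N by (intro divide_left_mono mult_right_mono mult_pos_pos) auto
  have gh: "real d * real d \<le> real_of_int g * real_of_int h"
    using d_le_g d_le_h by (intro mult_mono) auto
  have c: "\<delta> * N / (real_of_int g * real_of_int h) \<le> \<delta> * N / (real d)^2"
    unfolding power2_eq_square using gh d0 \<delta> N g_pos h_pos by (intro divide_left_mono) auto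
  have "2 * real (lattice_det (lattice_d L d)) = 2 * real_of_int g * real_of_int h" using det by simp
  then show ?thesis using count_main a b c by simp
qed

lemma empt:
  assumes x: "x \<in> Tset \<alpha> \<delta> N" and dv: "int d dvd fst x" "int d dvd snd x" and d: "d \<ge> 1"
    and dio: "\<And>u v. v \<ge> 1 \<Longrightarrow> \<bar>real_of_int u - \<alpha> * real_of_int v\<bar> \<ge> c / real_of_int v"
    and \<delta>: "\<delta> > 0"
  shows "(real d)^2 * c \<le> \<delta> * N^2"
proof -
  obtain u' where u: "fst x = int d * u'" using dv(1) by (auto elim: dvdE)
  obtain v' where v: "snd x = int d * v'" using dv(2) by (auto elim: dvdE)
  have xs: "0 < snd x" "real_of_int (snd x) \<le> N" "0 < real_of_int (fst x) - \<alpha> * real_of_int (snd x)"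
      "real_of_int (fst x) - \<alpha> * real_of_int (snd x) \<le> \<delta> * real_of_int (snd x)"
    using x by (auto simp: Tset_def)
  have d0: "real d > 0" using d by simp
  have v1: "v' \<ge> 1" using xs(1) v d by (simp add: zero_less_mult_iff)
  have v1r: "real_of_int v' \<ge> 1" using v1 by simp
  have e: "real_of_int (fst x) - \<alpha> * real_of_int (snd x) = real d * (real_of_int u' - \<alpha> * real_of_int v')"
    by (simp add: u v algebra_simps)
  have pos: "0 < real_of_int u' - \<alpha> * real_of_int v'" using xs(3) e d0 by (simp add: zero_less_mult_iff)
  have "real d * (real_of_int u' - \<alpha> * real_of_int v') \<le> real d * (\<delta> * real_of_int v')"
    using xs(4) unfolding e by (simp add: v algebra_simps)
  then have le: "real_of_int u' - \<alpha> * real_of_int v' \<le> \<delta> * real_of_int v'"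
    using d0 by (rule mult_left_le_imp_le)
  have "c / real_of_int v' \<le> \<delta> * real_of_int v'" using dio[OF v1, of u'] pos le by simp
  then have "c \<le> \<delta> * real_of_int v' * real_of_int v'" using v1r by (simp add: divide_le_eq)
  then have "(real d)^2 * c \<le> (real d)^2 * (\<delta> * real_of_int v' * real_of_int v')"
    by (intro mult_left_mono) auto
  also have "\<dots> = \<delta> * (real_of_int (snd x))^2" by (simp add: v power2_eq_square)
  also have "\<dots> \<le> \<delta> * N^2"
    using xs(1,2) \<delta> by (intro mult_left_mono power_mono) auto
  finally show ?thesis .
qed


lemma dvd_gcd_nat_iff:
  fixes u v :: int
  shows "(int d dvd u \<and> int d dvd v) \<longleftrightarrow> d dvd nat (gcd u v)"
proof -
  have "(int d dvd u \<and> int d dvd v) \<longleftrightarrow> int d dvd gcd u v" by simp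
  also have "gcd u v = int (nat (gcd u v))" by simp
  finally show ?thesis by (simp only: int_dvd_int_iff)
qed

lemma mob_rearr:
  fixes L :: "(int \<times> int) set" and D1 :: nat
  assumes bound: "\<And>d x. d \<ge> 1 \<Longrightarrow> x \<in> L \<inter> Tset \<alpha> \<delta> N \<Longrightarrow> int d dvd fst x \<Longrightarrow> int d dvd snd x \<Longrightarrow> d \<le> D1"
  shows "real (card {x \<in> L \<inter> Tset \<alpha> \<delta> N. coprime (fst x) (snd x)}) =
     (\<Sum>k<D1. real_of_int (moebius (Suc k)) * real (card (lattice_d L (Suc k) \<inter> Tset \<alpha> \<delta> N)))"
proof -
  define A0 where "A0 = L \<inter> Tset \<alpha> \<delta> N"
  have fin: "finite A0" unfolding A0_def using Tset_finite by blast
  define n where "n x = nat (gcd (fst x) (snd x))" for x :: "int \<times> int"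
  have npos: "n x > 0" if "x \<in> A0" for x
    using that by (auto simp: A0_def Tset_def n_def)
  have cop: "coprime (fst x) (snd x) \<longleftrightarrow> n x = 1" if "x \<in> A0" for x
    using npos[OF that] by (auto simp: n_def coprime_iff_gcd_eq_1)
  have inner: "real_of_int (if n x = 1 then 1 else 0) =
      (\<Sum>k<D1. if Suc k dvd n x then real_of_int (moebius (Suc k)) else 0)" if x: "x \<in> A0" for x
  proof -
    have "(\<Sum>d | d dvd n x. moebius d) = (if n x = 1 then 1 else 0)" by (rule moebius_sum[OF npos[OF x]])
    moreover have "{d. d dvd n x} = Suc ` {k \<in> {..<D1}. Suc k dvd n x}"
    proof
      show "{d. d dvd n x} \<subseteq> Suc ` {k \<in> {..<D1}. Suc k dvd n x}"
      proof
        fix d assume d: "d \<in> {d. d dvd n x}"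
        then have d1: "d \<ge> 1" using npos[OF x] by (cases d) auto
        have "int d dvd fst x \<and> int d dvd snd x" using d dvd_gcd_nat_iff by (simp add: n_def)
        then have "d \<le> D1" using bound[OF d1] x by (auto simp: A0_def)
        then show "d \<in> Suc ` {k \<in> {..<D1}. Suc k dvd n x}" using d d1
          by (intro image_eqI[of _ _ "d - 1"]) auto
      qed
    qed auto
    ultimately have "(\<Sum>k\<in>{k \<in> {..<D1}. Suc k dvd n x}. moebius (Suc k)) = (if n x = 1 then 1 else 0)"
      by (simp add: sum.reindex)
    then have "real_of_int (\<Sum>k\<in>{k \<in> {..<D1}. Suc k dvd n x}. moebius (Suc k)) = real_of_int (if n x = 1 then 1 else 0)"
      by (rule arg_cong)
    then have "real_of_int (if n x = 1 then 1 else 0) = (\<Sum>k\<in>{k \<in> {..<D1}. Suc k dvd n x}. real_of_int (moebius (Suc k)))"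
      by (simp only: of_int_sum)
    also have "\<dots> = (\<Sum>k<D1. if Suc k dvd n x then real_of_int (moebius (Suc k)) else 0)"
      by (rule sum.inter_filter) simp
    finally show ?thesis .
  qed
  have "real (card {x \<in> A0. coprime (fst x) (snd x)}) = (\<Sum>x\<in>A0. if coprime (fst x) (snd x) then 1 else 0)"
    using fin by (simp add: sum.If_cases Int_def)
  also have "\<dots> = (\<Sum>x\<in>A0. real_of_int (if n x = 1 then 1 else 0))"
    by (rule sum.cong) (auto simp: cop)
  also have "\<dots> = (\<Sum>x\<in>A0. \<Sum>k<D1. if Suc k dvd n x then real_of_int (moebius (Suc k)) else 0)"
    by (rule sum.cong[OF refl]) (rule inner)
  also have "\<dots> = (\<Sum>k<D1. \<Sum>x\<in>A0. if Suc k dvd n x then real_of_int (moebius (Suc k)) else 0)"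
    by (rule sum.swap)
  also have "\<dots> = (\<Sum>k<D1. real_of_int (moebius (Suc k)) * real (card (lattice_d L (Suc k) \<inter> Tset \<alpha> \<delta> N)))"
  proof (rule sum.cong)
    fix k assume "k \<in> {..<D1}"
    have eq: "{x \<in> A0. Suc k dvd n x} = lattice_d L (Suc k) \<inter> Tset \<alpha> \<delta> N"
      unfolding A0_def lattice_d_def n_def using dvd_gcd_nat_iff[of "Suc k"] by auto
    have "(\<Sum>x\<in>A0. if Suc k dvd n x then real_of_int (moebius (Suc k)) else 0)
        = real_of_int (moebius (Suc k)) * real (card {x \<in> A0. Suc k dvd n x})"
      using fin by (simp add: sum.If_cases Int_def)
    then show "(\<Sum>x\<in>A0. if Suc k dvd n x then real_of_int (moebius (Suc k)) else 0)
        = real_of_int (moebius (Suc k)) * real (card (lattice_d L (Suc k) \<inter> Tset \<alpha> \<delta> N))"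
      using eq by simp
  qed simp
  finally show ?thesis by (simp add: A0_def)
qed

lemma S_card:
  assumes \<alpha>: "\<alpha> > 0"
  shows "card (S_set \<alpha> r \<epsilon> K L B) = card {x \<in> L \<inter> Tset \<alpha> (\<epsilon> * B powr (- 1 / r)) (K * B). coprime (fst x) (snd x)}"
proof -
  define f where "f = (\<lambda>(u::nat, v::nat). (int u, int v))"
  have inj: "inj f" by (auto simp: f_def inj_def)
  have "f ` S_set \<alpha> r \<epsilon> K L B = {x \<in> L \<inter> Tset \<alpha> (\<epsilon> * B powr (- 1 / r)) (K * B). coprime (fst x) (snd x)}"
  proof
    show "f ` S_set \<alpha> r \<epsilon> K L B \<subseteq> {x \<in> L \<inter> Tset \<alpha> (\<epsilon> * B powr (- 1 / r)) (K * B). coprime (fst x) (snd x)}"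
    proof
      fix y assume "y \<in> f ` S_set \<alpha> r \<epsilon> K L B"
      then obtain u v where uv: "(u,v) \<in> S_set \<alpha> r \<epsilon> K L B" "y = (int u, int v)" by (auto simp: f_def)
      have c: "(int u, int v) \<in> L" "coprime u v" "0 < real u / real v - \<alpha>"
        "real u / real v - \<alpha> \<le> \<epsilon> * B powr (- 1 / r)" "real v \<le> K * B"
        using uv by (auto simp: S_set_def)
      have v0: "v > 0" using c(3) \<alpha> by (cases "v = 0") auto
      then have vr: "real v > 0" by simp
      have e: "real u / real v - \<alpha> = (real u - \<alpha> * real v) / real v" using vr by (simp add: field_simps)
      have "0 < real u - \<alpha> * real v" using c(3) vr unfolding e by (simp add: zero_less_divide_iff)
      moreover have "real u - \<alpha> * real v \<le> \<epsilon> * B powr (- 1 / r) * real v"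
        using c(4) vr unfolding e by (simp add: divide_le_eq)
      ultimately show "y \<in> {x \<in> L \<inter> Tset \<alpha> (\<epsilon> * B powr (- 1 / r)) (K * B). coprime (fst x) (snd x)}"
        using c v0 uv by (auto simp: Tset_def mult.commute)
    qed
    show "{x \<in> L \<inter> Tset \<alpha> (\<epsilon> * B powr (- 1 / r)) (K * B). coprime (fst x) (snd x)} \<subseteq> f ` S_set \<alpha> r \<epsilon> K L B"
    proof
      fix x assume x: "x \<in> {x \<in> L \<inter> Tset \<alpha> (\<epsilon> * B powr (- 1 / r)) (K * B). coprime (fst x) (snd x)}"
      obtain u v where uv: "x = (u,v)" by (cases x)
      have c: "(u,v) \<in> L" "coprime u v" "0 < v" "real_of_int v \<le> K * B" "0 < real_of_int u - \<alpha> * real_of_int v"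
        "real_of_int u - \<alpha> * real_of_int v \<le> \<epsilon> * B powr (- 1 / r) * real_of_int v"
        using x uv by (auto simp: Tset_def mult.commute)
      have vr: "real_of_int v > 0" using c by simp
      have "real_of_int u > 0" using c(5) \<alpha> vr by (smt (verit) mult_pos_pos)
      then have u0: "u > 0" by simp
      have e: "real (nat u) / real (nat v) - \<alpha> = (real_of_int u - \<alpha> * real_of_int v) / real_of_int v"
        using vr u0 c(3) by (simp add: field_simps)
      have m1: "(int (nat u), int (nat v)) \<in> L" using c u0 by simp
      have "coprime (int (nat u)) (int (nat v))" using c u0 by simp
      then have m2: "coprime (nat u) (nat v)" by (simp only: coprime_int_iff)
      have m3: "0 < real (nat u) / real (nat v) - \<alpha>" unfolding e using c(5) vr by (simp add: zero_less_divide_iff)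
      have m4: "real (nat u) / real (nat v) - \<alpha> \<le> \<epsilon> * B powr (- 1 / r)" unfolding e using c(6) vr by (simp add: divide_le_eq)
      have m5: "real (nat v) \<le> K * B" using c(4) c(3) by simp
      have "(nat u, nat v) \<in> S_set \<alpha> r \<epsilon> K L B"
        unfolding S_set_def using m1 m2 m3 m4 m5 by (simp only: mem_Collect_eq case_prod_conv)
      moreover have "x = f (nat u, nat v)" using uv u0 c(3) by (simp add: f_def)
      ultimately show "x \<in> f ` S_set \<alpha> r \<epsilon> K L B" by blast
    qed
  qed
  then show ?thesis using card_image[OF inj_on_subset[OF inj, of "S_set \<alpha> r \<epsilon> K L B"]] by auto
qed


lemma core:
  fixes a b :: nat and \<epsilon> K B r W :: real and L :: "(int \<times> int) set"
  assumes a: "0 < a" "a < b" and irr: "sqrt (real b / real a) \<notin> \<rat>" and \<epsilon>: "\<epsilon> > 0" and K: "K > 0"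
    and L: "full_lattice L"
    and B: "B \<ge> exp 1" "B \<ge> \<epsilon>" and r: "0 < r" "r < 1"
    and Plo: "K * B * sqrt (\<epsilon> * B powr (-1/r)) \<ge> sqrt \<epsilon>"
    and Phi: "K * B * sqrt (\<epsilon> * B powr (-1/r)) \<le> W * B^2" and W: "W \<ge> 0"
  shows "\<bar>real (card (S_set (sqrt (real b / real a)) r \<epsilon> K L B)) - Theta L * (\<epsilon> * B powr (-1/r) * (K * B)^2 / 2)\<bar>
     \<le> K * B * sqrt (\<epsilon> * B powr (-1/r)) *
        ((6 + 1 / sqrt \<epsilon> + 1 / (1 / (real a * (1 + 2 * sqrt (real b / real a)))))
           * (3 + ln (W / sqrt (1 / (real a * (1 + 2 * sqrt (real b / real a)))) + 1))
         + 1 / sqrt (1 / (real a * (1 + 2 * sqrt (real b / real a)))) + 2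
         + sqrt (1 / (real a * (1 + 2 * sqrt (real b / real a))))) * ln B"
proof -
  define \<alpha> where "\<alpha> = sqrt (real b / real a)"
  define c where "c = 1 / (real a * (1 + 2 * \<alpha>))"
  define \<delta> where "\<delta> = \<epsilon> * B powr (-1/r)"
  define N where "N = K * B"
  define s\<delta> where "s\<delta> = sqrt \<delta>"
  define P where "P = N * s\<delta>"
  have Pdef: "K * B * sqrt (\<epsilon> * B powr (-1/r)) = P" by (simp add: P_def N_def s\<delta>_def \<delta>_def)
  have "1 \<le> exp (1::real)" by simp
  then have B1: "B \<ge> 1" using B(1) by linarith
  have B0: "B > 0" using B1 by simp
  have lnB: "ln B \<ge> 1"
  proof -
    have "ln (exp 1) \<le> ln B" using B(1) B0 by (subst ln_le_cancel_iff) auto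
    then show ?thesis by simp
  qed
  have a0: "real a > 0" using a by simp
  have b0: "real b > 0" using a by simp
  have \<alpha>0: "\<alpha> > 0" using a0 b0 by (simp add: \<alpha>_def)
  have c0: "c > 0" using a0 \<alpha>0 by (simp add: c_def)
  have \<delta>0: "\<delta> > 0" using \<epsilon> B0 by (simp add: \<delta>_def)
  have \<delta>1: "\<delta> \<le> 1"
  proof -
    have "B powr (-1/r) \<le> B powr (-1)" using r B1 by (intro powr_mono) (auto simp: field_simps)
    also have "\<dots> = 1 / B" using B0 by (simp add: powr_minus divide_inverse)
    finally have "\<epsilon> * B powr (-1/r) \<le> \<epsilon> * (1 / B)" using \<epsilon> by (intro mult_left_mono) auto
    then have "\<delta> \<le> \<epsilon> * (1 / B)" by (simp add: \<delta>_def)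
    also have "\<dots> \<le> 1" using B(2) B0 by (simp add: field_simps)
    finally show ?thesis .
  qed
  have s\<delta>0: "s\<delta> > 0" using \<delta>0 by (simp add: s\<delta>_def)
  have s\<delta>1: "s\<delta> \<le> 1" using \<delta>1 by (simp add: s\<delta>_def)
  have s\<delta>sq: "s\<delta> * s\<delta> = \<delta>" using \<delta>0 by (simp add: s\<delta>_def)
  have "s\<delta> * s\<delta> \<le> s\<delta> * 1" using s\<delta>0 s\<delta>1 by (intro mult_left_mono) auto
  then have \<delta>le: "\<delta> \<le> s\<delta>" using s\<delta>sq by simp
  have N0: "N > 0" using K B0 by (simp add: N_def)
  have P0: "P > 0" using N0 s\<delta>0 by (simp add: P_def)
  have P2: "\<delta> * N^2 = P^2" by (simp add: P_def power2_eq_square s\<delta>sq[symmetric] algebra_simps)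
  have Plo': "1 \<le> P / sqrt \<epsilon>" using Plo Pdef \<epsilon> by simp
  define Q where "Q = nat \<lceil>1 / s\<delta>\<rceil>"
  have Qge: "real Q \<ge> 1 / s\<delta>" unfolding Q_def using s\<delta>0 by (simp add: of_nat_nat)
  have Q0: "Q > 0" using Qge s\<delta>0 s\<delta>1 by (cases "Q = 0") (auto simp: field_simps)
  have Qle: "real Q \<le> 2 / s\<delta>"
  proof -
    have "real Q \<le> 1 / s\<delta> + 1" unfolding Q_def using s\<delta>0
      by (simp add: of_nat_nat)
    moreover have "1 \<le> 1 / s\<delta>" using s\<delta>0 s\<delta>1 by simp
    ultimately show ?thesis by simp
  qed
  obtain p q where pq: "coprime p q" "0 < q" "q \<le> int Q" "\<bar>of_int q * \<alpha> - of_int p\<bar> < 1 / real Q"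
    using Dirichlet_approx_coprime[OF Q0, of \<alpha>] by blast
  obtain u v where uv: "u * p + v * q = 1"
    using bezout_int[of p q] pq(1) by (auto simp: coprime_iff_gcd_eq_1)
  have det1: "p * u - q * (-v) = 1" using uv by (simp add: algebra_simps)
  define \<eta> where "\<eta> = real_of_int p - \<alpha> * real_of_int q"
  have \<eta>1: "\<bar>\<eta>\<bar> \<le> s\<delta>"
  proof -
    have "\<bar>\<eta>\<bar> < 1 / real Q" using pq(4) by (simp add: \<eta>_def abs_minus_commute mult.commute)
    also have "1 / real Q \<le> s\<delta>" using Qge s\<delta>0 Q0 by (simp add: field_simps)
    finally show ?thesis by simp
  qed
  have q1: "real_of_int q \<le> 2 / s\<delta>" using pq(3) Qle by linarith
  have q0: "real_of_int q > 0" using pq(2) by simp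
  have Rb: "\<bar>real_of_int p - \<alpha> * real_of_int q\<bar> * N + real_of_int q * \<delta> * N \<le> 3 * P"
  proof -
    have "\<bar>\<eta>\<bar> * N \<le> s\<delta> * N" using \<eta>1 N0 by (intro mult_right_mono) auto
    moreover have "real_of_int q * \<delta> * N \<le> (2 / s\<delta>) * \<delta> * N"
      using q1 \<delta>0 N0 by (intro mult_right_mono) auto
    moreover have "(2 / s\<delta>) * \<delta> * N = 2 * P" using s\<delta>0 by (simp add: P_def s\<delta>sq[symmetric])
    ultimately show ?thesis by (simp add: \<eta>_def P_def mult.commute)
  qed
  have dio: "\<And>u v. v \<ge> 1 \<Longrightarrow> \<bar>real_of_int u - \<alpha> * real_of_int v\<bar> \<ge> c / real_of_int v"
    using dioph[OF a(1) irr] by (simp add: \<alpha>_def c_def)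
  have Nq: "N / real_of_int q \<le> P / c"
  proof -
    have "c / real_of_int q \<le> \<bar>\<eta>\<bar>" using dio[of q p] pq(2) by (simp add: \<eta>_def)
    then have "c / real_of_int q \<le> s\<delta>" using \<eta>1 by simp
    then have "c \<le> s\<delta> * real_of_int q" using q0 by (simp add: divide_le_eq)
    then have "N * c \<le> N * (s\<delta> * real_of_int q)" using N0 by (intro mult_left_mono) auto
    then show ?thesis using q0 c0 by (simp add: divide_le_eq le_divide_eq P_def algebra_simps)
  qed
  obtain M where M: "grp L" "M > 0" "(M,0) \<in> L" "(0,M) \<in> L" using full_lattice_grp[OF L] by blast
  define D1 where "D1 = nat \<lfloor>P / sqrt c\<rfloor>"
  have D1le: "real D1 \<le> P / sqrt c" unfolding D1_def using P0 c0 by simp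
  have D1ge: "real D1 + 1 \<ge> P / sqrt c" unfolding D1_def using P0 c0 by (simp add: of_nat_nat)
  have bound: "d \<le> D1" if d: "d \<ge> 1" and x: "x \<in> L \<inter> Tset \<alpha> \<delta> N" and dv: "int d dvd fst x" "int d dvd snd x" for d x
  proof -
    have "(real d)^2 * c \<le> \<delta> * N^2" using empt[of x \<alpha> \<delta> N d c] x dv d dio \<delta>0 by blast
    then have "(real d * sqrt c)^2 \<le> P^2" using c0 P2 by (simp add: power_mult_distrib)
    then have "real d * sqrt c \<le> P" by (rule power2_le_imp_le) (use P0 in linarith)
    then have "real d \<le> P / sqrt c" using c0 by (simp add: le_divide_eq)
    then show ?thesis unfolding D1_def by (simp add: le_nat_floor)
  qed
  have cardS: "real (card (S_set \<alpha> r \<epsilon> K L B)) =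
     (\<Sum>k<D1. real_of_int (moebius (Suc k)) * real (card (lattice_d L (Suc k) \<inter> Tset \<alpha> \<delta> N)))"
  proof -
    have "card (S_set \<alpha> r \<epsilon> K L B) = card {x \<in> L \<inter> Tset \<alpha> \<delta> N. coprime (fst x) (snd x)}"
      using S_card[OF \<alpha>0, of r \<epsilon> K L B] by (simp add: \<delta>_def N_def)
    then show ?thesis using mob_rearr[OF bound] by simp
  qed
  define A where "A = \<delta> * N^2 / 2"
  define cd where "cd k = real (card (lattice_d L (Suc k) \<inter> Tset \<alpha> \<delta> N))" for k
  define dt where "dt k = real (lattice_det (lattice_d L (Suc k)))" for k
  define f where "f k = real_of_int (moebius (Suc k)) / dt k" for k
  have dt_ge: "dt k \<ge> (real (Suc k))^2" for k unfolding dt_def using det_ge[OF M, of "Suc k"] by simp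
  have dt0: "dt k > 0" for k
  proof -
    have "(real (Suc k))^2 > 0" by simp
    then show ?thesis using dt_ge[of k] by linarith
  qed
  have perd: "\<bar>cd k - A / dt k\<bar> \<le> (6*P + 1 + P / c) / real (Suc k) + 1 + P / (real (Suc k))^2" for k
  proof -
    have "\<bar>cd k - \<delta> * N^2 / (2 * dt k)\<bar>
       \<le> (2*(3*P) + 1) / real (Suc k) + 1 + N / (real (Suc k) * real_of_int q) + \<delta> * N / (real (Suc k))^2"
      unfolding cd_def dt_def using per_d[OF M, of "Suc k" p u q "-v" \<delta> N \<alpha> "3*P"] det1 pq(2) \<delta>0 N0 Rb by simp
    moreover have "N / (real (Suc k) * real_of_int q) \<le> (P / c) / real (Suc k)"
    proof -
      have "N / (real (Suc k) * real_of_int q) = (N / real_of_int q) / real (Suc k)"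
        by (simp add: divide_divide_eq_left mult.commute)
      also have "\<dots> \<le> (P / c) / real (Suc k)" using Nq by (intro divide_right_mono) auto
      finally show ?thesis .
    qed
    moreover have "\<delta> * N / (real (Suc k))^2 \<le> P / (real (Suc k))^2"
    proof -
      have "\<delta> * N \<le> s\<delta> * N" using \<delta>le N0 by (intro mult_right_mono) auto
      then show ?thesis by (simp add: P_def divide_right_mono mult.commute)
    qed
    moreover have "A / dt k = \<delta> * N^2 / (2 * dt k)" by (simp add: A_def)
    ultimately show ?thesis by (simp add: add_divide_distrib)
  qed
  have fb: "\<bar>f n\<bar> \<le> 1 / (real (Suc n))^2" for n
  proof -
    have "\<bar>f n\<bar> = \<bar>real_of_int (moebius (Suc n))\<bar> / dt n" using dt0[of n] by (simp add: f_def abs_divide)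
    also have "\<dots> \<le> 1 / dt n" using moebius_abs_le[of "Suc n"] dt0[of n] by (intro divide_right_mono) auto
    also have "\<dots> \<le> 1 / (real (Suc n))^2" using dt_ge[of n] dt0[of n] by (intro divide_left_mono) auto
    finally show ?thesis .
  qed
  have Th: "Theta L = suminf f" unfolding Theta_def by (rule arg_cong[where f=suminf]) (simp add: fun_eq_iff f_def dt_def)
  have tail: "\<bar>Theta L - (\<Sum>k<D1. f k)\<bar> \<le> 2 / real (D1 + 1)"
    using theta_facts(2)[of f, OF fb] Th by simp
  have split: "real (card (S_set \<alpha> r \<epsilon> K L B)) - Theta L * A =
      (\<Sum>k<D1. real_of_int (moebius (Suc k)) * (cd k - A / dt k)) - A * (Theta L - (\<Sum>k<D1. f k))"
    unfolding cardS cd_def[symmetric]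
    by (simp add: f_def algebra_simps sum_distrib_left sum_subtractf sum_distrib_right)
  have s1: "\<bar>\<Sum>k<D1. real_of_int (moebius (Suc k)) * (cd k - A / dt k)\<bar>
      \<le> (\<Sum>k<D1. (6*P + 1 + P / c) / real (Suc k) + 1 + P / (real (Suc k))^2)"
  proof -
    have "\<bar>\<Sum>k<D1. real_of_int (moebius (Suc k)) * (cd k - A / dt k)\<bar>
        \<le> (\<Sum>k<D1. \<bar>real_of_int (moebius (Suc k)) * (cd k - A / dt k)\<bar>)" by (rule sum_abs)
    also have "\<dots> \<le> (\<Sum>k<D1. (6*P + 1 + P / c) / real (Suc k) + 1 + P / (real (Suc k))^2)"
    proof (rule sum_mono)
      fix k assume "k \<in> {..<D1}"
      have "\<bar>real_of_int (moebius (Suc k)) * (cd k - A / dt k)\<bar> \<le> 1 * \<bar>cd k - A / dt k\<bar>"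
        unfolding abs_mult using moebius_abs_le[of "Suc k"] by (intro mult_right_mono) auto
      then show "\<bar>real_of_int (moebius (Suc k)) * (cd k - A / dt k)\<bar>
          \<le> (6*P + 1 + P / c) / real (Suc k) + 1 + P / (real (Suc k))^2" using perd[of k] by simp
    qed
    finally show ?thesis .
  qed
  have s2: "(\<Sum>k<D1. (6*P + 1 + P / c) / real (Suc k) + 1 + P / (real (Suc k))^2)
      \<le> (6*P + 1 + P / c) * (1 + ln (real D1 + 1)) + real D1 + 2 * P"
  proof -
    have "(\<Sum>k<D1. (6*P + 1 + P / c) / real (Suc k) + 1 + P / (real (Suc k))^2)
        = (6*P + 1 + P / c) * (\<Sum>k<D1. 1 / real (Suc k)) + real D1 + P * (\<Sum>k<D1. 1 / (real (Suc k))^2)"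
      by (simp add: sum.distrib sum_distrib_left)
    moreover have "(6*P + 1 + P / c) * (\<Sum>k<D1. 1 / real (Suc k)) \<le> (6*P + 1 + P / c) * (1 + ln (real D1 + 1))"
      using harm_bound[of D1] P0 c0 by (intro mult_left_mono) auto
    moreover have "P * (\<Sum>k<D1. 1 / (real (Suc k))^2) \<le> P * 2"
      using sq_sum_bound[of D1] P0 by (intro mult_left_mono) auto
    ultimately show ?thesis by simp
  qed
  have s3: "\<bar>A * (Theta L - (\<Sum>k<D1. f k))\<bar> \<le> P * sqrt c"
  proof -
    have A0: "A \<ge> 0" using \<delta>0 by (simp add: A_def)
    have "\<bar>A * (Theta L - (\<Sum>k<D1. f k))\<bar> \<le> A * (2 / real (D1 + 1))"
      unfolding abs_mult abs_of_nonneg[OF A0] using A0 tail by (rule mult_left_mono[rotated])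
    also have "\<dots> = P^2 / (real D1 + 1)" by (simp add: A_def P2)
    also have "\<dots> \<le> P^2 / (P / sqrt c)" using P0 c0 D1ge by (intro divide_left_mono) auto
    also have "\<dots> = P * sqrt c" using P0 c0 by (simp add: power2_eq_square field_simps)
    finally show ?thesis .
  qed
  define W' where "W' = W / sqrt c + 1"
  have W'1: "W' \<ge> 1" using W c0 by (simp add: W'_def)
  have lnD: "1 + ln (real D1 + 1) \<le> (3 + ln W') * ln B"
  proof -
    have "real D1 + 1 \<le> W * B^2 / sqrt c + 1" using D1le Phi Pdef c0 by (smt (verit) divide_right_mono real_sqrt_gt_zero)
    also have "\<dots> \<le> W' * B^2"
    proof -
      have "1 \<le> B^2" using B1 by simp
      then show ?thesis unfolding W'_def using W c0 by (simp add: algebra_simps)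
    qed
    finally have "ln (real D1 + 1) \<le> ln (W' * B^2)" using W'1 by simp
    also have "\<dots> = ln W' + 2 * ln B" using W'1 B0 by (simp add: ln_mult ln_realpow)
    finally have "1 + ln (real D1 + 1) \<le> 1 + ln W' + 2 * ln B" by simp
    also have "\<dots> \<le> (3 + ln W') * ln B"
    proof -
      have "ln W' \<ge> 0" using W'1 by simp
      then have "(1 + ln W') * 1 \<le> (1 + ln W') * ln B" using lnB by (intro mult_left_mono) auto
      then show ?thesis by (simp add: algebra_simps)
    qed
    finally show ?thesis .
  qed
  define K1 where "K1 = 6 + 1 / sqrt \<epsilon> + 1 / c"
  have K1pos: "K1 > 0" using \<epsilon> c0 by (simp add: K1_def add_pos_pos)
  have K1P: "6*P + 1 + P / c \<le> P * K1"
    using Plo' \<epsilon> by (simp add: K1_def algebra_simps divide_le_eq)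
  have final: "(6*P + 1 + P / c) * (1 + ln (real D1 + 1)) + real D1 + 2 * P + P * sqrt c
      \<le> P * (K1 * (3 + ln W') + 1 / sqrt c + 2 + sqrt c) * ln B"
  proof -
    have l0: "1 + ln (real D1 + 1) \<ge> 0" by simp
    have t1: "(6*P + 1 + P / c) * (1 + ln (real D1 + 1)) \<le> (P * K1) * ((3 + ln W') * ln B)"
      using K1P lnD l0 P0 c0 K1pos by (intro mult_mono) auto
    have t2: "real D1 \<le> P / sqrt c * ln B"
      using D1le lnB P0 c0 by (smt (verit) mult_le_cancel_left1 divide_pos_pos real_sqrt_gt_zero)
    have t3: "2 * P + P * sqrt c \<le> (2 * P + P * sqrt c) * ln B"
      using lnB P0 c0 by (smt (verit) mult_le_cancel_left1 mult_pos_pos real_sqrt_gt_zero)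
    have "(P * K1) * ((3 + ln W') * ln B) + P / sqrt c * ln B + (2 * P + P * sqrt c) * ln B
        = P * (K1 * (3 + ln W') + 1 / sqrt c + 2 + sqrt c) * ln B" by (simp add: algebra_simps)
    then show ?thesis using t1 t2 t3 by linarith
  qed
  have "\<bar>real (card (S_set \<alpha> r \<epsilon> K L B)) - Theta L * A\<bar>
      \<le> P * (K1 * (3 + ln W') + 1 / sqrt c + 2 + sqrt c) * ln B"
    unfolding split using s1 s2 s3 final by (smt (verit))
  then show ?thesis
    unfolding Pdef by (simp add: A_def \<delta>_def N_def K1_def W'_def c_def \<alpha>_def)
qed


theorem mainTheorem13:
  fixes a b :: nat and \<epsilon> :: real
  assumes "0 < a" and "a < b" and "coprime a b"
    and "sqrt (real b / real a) \<notin> \<rat>"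
    and "\<epsilon> > 0"
  shows "\<exists>B0. \<forall>r::real. 1/2 < r \<and> r < 7/10 \<longrightarrow>
    (\<exists>C. \<forall>(K::real) (L::(int \<times> int) set) (B::real).
       K > 0 \<and> full_lattice L \<and> (\<exists>u v. (u, v) \<in> L \<and> coprime u v) \<and> B \<ge> B0 \<and>
       K^2 * real b \<le> (2^21 * 162 * (sqrt (real b / real a))^2 * \<epsilon>^2) powr (-2/5)
            * B powr (4/5 * (1/r - 1) - 3/5 * (2 - 1/r)) \<and>
       real b * real (lattice_det L)^2 \<le> K^2 * B powr (2 - 1/r)
       \<longrightarrow>
       \<bar>real (card (S_set (sqrt (real b / real a)) r \<epsilon> K L B))
          - Theta L * \<epsilon> * K^2 / 2 * B powr (2 - 1/r)\<bar>
       \<le> C * (K powr (3/2) * real b powr (1/4) * real (lattice_det L) powr (1/2)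
                 * B powr (3/4 * (2 - 1/r)) * ln B
              + K * real b powr (3/2) * B powr (1 - 1/(2*r)) * ln B))"
proof -
  note a = assms(1,2) and irr = assms(4) and \<epsilon> = assms(5)
  define \<alpha> where "\<alpha> = sqrt (real b / real a)"
  define U where "U = (2^21 * 162 * (sqrt (real b / real a))^2 * \<epsilon>^2) powr (-2/5::real)"
  define W where "W = sqrt \<epsilon> * sqrt U"
  define c where "c = 1 / (real a * (1 + 2 * sqrt (real b / real a)))"
  define K0 where "K0 = (6 + 1 / sqrt \<epsilon> + 1 / c) * (3 + ln (W / sqrt c + 1)) + 1 / sqrt c + 2 + sqrt c"
  have a0: "real a > 0" using a by simp
  have b1: "real b \<ge> 1" using a by simp
  have s0: "0 \<le> sqrt (real b / real a)" by simp
  have s1: "0 < 1 + 2 * sqrt (real b / real a)" using s0 by linarith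
  have c0: "c > 0" using a0 s1 unfolding c_def by (intro divide_pos_pos mult_pos_pos) auto
  have U0: "U \<ge> 0" by (simp add: U_def)
  have W0: "W \<ge> 0" using \<epsilon> U0 by (simp add: W_def)
  have K0pos: "K0 \<ge> 0"
  proof -
    have "ln (W / sqrt c + 1) \<ge> 0" using W0 c0 by simp
    then show ?thesis using \<epsilon> c0 by (simp add: K0_def)
  qed
  show ?thesis
  proof (rule exI[of _ "max (exp 1) \<epsilon>"], intro allI impI, rule exI[of _ "sqrt \<epsilon> * K0"], intro allI impI)
    fix r :: real and K :: real and L :: "(int \<times> int) set" and B :: real
    assume r: "1/2 < r \<and> r < 7/10"
    assume h: "K > 0 \<and> full_lattice L \<and> (\<exists>u v. (u, v) \<in> L \<and> coprime u v) \<and> max (exp 1) \<epsilon> \<le> B \<and>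
       K^2 * real b \<le> (2^21 * 162 * (sqrt (real b / real a))^2 * \<epsilon>^2) powr (-2/5)
            * B powr (4/5 * (1/r - 1) - 3/5 * (2 - 1/r)) \<and>
       real b * real (lattice_det L)^2 \<le> K^2 * B powr (2 - 1/r)"
    have K: "K > 0" and L: "full_lattice L" and Be: "B \<ge> exp 1" and Beps: "B \<ge> \<epsilon>"
      and hK: "K^2 * real b \<le> U * B powr (4/5 * (1/r - 1) - 3/5 * (2 - 1/r))"
      and hD: "real b * real (lattice_det L)^2 \<le> K^2 * B powr (2 - 1/r)"
      using h by (auto simp: U_def)
    have r0: "0 < r" "r < 1" using r by auto
    have "1 \<le> exp (1::real)" by simp
    then have B1: "B \<ge> 1" using Be by linarith
    have B0: "B > 0" using B1 by simp
    have lnB: "ln B \<ge> 0" using B1 by simp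
    define X where "X = K * B powr (1 - 1/(2*r))"
    have X0: "X \<ge> 0" using K by (simp add: X_def)
    have Pid: "K * B * sqrt (\<epsilon> * B powr (-1/r)) = sqrt \<epsilon> * X"
    proof -
      have q: "B powr ((-1/r)/2) = sqrt (B powr (-1/r))" by (rule powr_half_sqrt_powr) (use B0 in simp)
      have "(-1/r)/2 = - 1/(2*r)" by simp
      then have s: "sqrt (B powr (-1/r)) = B powr (- 1/(2*r))" using q by metis
      have t0: "B powr (1 + (- 1/(2*r))) = B * B powr (- 1/(2*r))" using B0 by (subst powr_add) simp
      have "1 + (- 1/(2*r)) = 1 - 1/(2*r)" by simp
      then have t: "B * B powr (- 1/(2*r)) = B powr (1 - 1/(2*r))" using t0 by metis
      show ?thesis unfolding X_def using s t by (simp add: real_sqrt_mult algebra_simps)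
    qed
    have X2: "X^2 = K^2 * B powr (2 - 1/r)"
    proof -
      have "(B powr (1 - 1/(2*r)))^2 = B powr (2 * (1 - 1/(2*r)))"
        using B0 by (simp add: powr_realpow[symmetric] powr_powr mult.commute)
      also have "2 * (1 - 1/(2*r)) = 2 - 1/r" using r0 by (simp add: field_simps)
      finally show ?thesis by (simp add: X_def power_mult_distrib)
    qed
    obtain M where M: "grp L" "M > 0" "(M,0) \<in> L" "(0,M) \<in> L" using full_lattice_grp[OF L] by blast
    have ld1: "lattice_d L 1 = L" by (auto simp: lattice_d_def)
    have det1: "real (lattice_det L) \<ge> 1" using det_ge[OF M, of 1] ld1 by simp
    have X1: "X \<ge> 1"
    proof -
      have dd: "1 \<le> real (lattice_det L)^2" using det1 by simp
      have "1 * 1 \<le> real b * real (lattice_det L)^2" using b1 dd by (intro mult_mono) auto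
      then have "1 \<le> X^2" using hD X2 by simp
      then have XX: "1 \<le> X * X" by (simp add: power2_eq_square)
      show ?thesis
      proof (rule ccontr)
        assume "\<not> 1 \<le> X"
        then have "X < 1" by simp
        then have "X * X \<le> X * 1" using X0 by (intro mult_left_mono) auto
        then show False using XX \<open>X < 1\<close> by simp
      qed
    qed
    have Plo: "K * B * sqrt (\<epsilon> * B powr (-1/r)) \<ge> sqrt \<epsilon>"
      unfolding Pid using X1 \<epsilon> by simp
    have Phi: "K * B * sqrt (\<epsilon> * B powr (-1/r)) \<le> W * B^2"
    proof -
      have e2: "4/5 * (1/r - 1) - 3/5 * (2 - 1/r) \<le> 2"
      proof -
        have x2: "1/r < 2" using r by (simp add: divide_less_eq)
        have gen: "4/5 * (x - 1) - 3/5 * (2 - x) \<le> (2::real)" if xl: "x < 2" for x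
        proof -
          have "4/5 * (x - 1) - 3/5 * (2 - x) = (7 * x - 10) / 5" by (simp add: field_simps)
          also have "\<dots> \<le> 2" using xl by (simp add: divide_le_eq)
          finally show ?thesis .
        qed
        show ?thesis by (rule gen[OF x2])
      qed
      have "B powr (4/5 * (1/r - 1) - 3/5 * (2 - 1/r)) \<le> B powr 2" using B1 e2 by (intro powr_mono) auto
      also have "B powr 2 = B^2" using B0 by (simp add: powr_numeral)
      finally have Bp: "B powr (4/5 * (1/r - 1) - 3/5 * (2 - 1/r)) \<le> B^2" .
      have "K^2 * 1 \<le> K^2 * real b" using b1 by (intro mult_left_mono) auto
      then have "K^2 \<le> K^2 * real b" by simp
      also have "\<dots> \<le> U * B powr (4/5 * (1/r - 1) - 3/5 * (2 - 1/r))" by (rule hK)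
      also have "\<dots> \<le> U * B^2" using Bp U0 by (intro mult_left_mono) auto
      finally have "K^2 \<le> U * B^2" .
      then have "sqrt (K^2) \<le> sqrt (U * B^2)" by (rule real_sqrt_le_mono)
      then have Kb: "K \<le> sqrt U * B" using K B0 by (simp add: real_sqrt_mult)
      have "B powr (1 - 1/(2*r)) \<le> B powr 1" using B1 r0 by (intro powr_mono) auto
      then have "B powr (1 - 1/(2*r)) \<le> B" using B0 by simp
      then have "X \<le> (sqrt U * B) * B" unfolding X_def using Kb K B0
        by (intro mult_mono) auto
      then have "sqrt \<epsilon> * X \<le> sqrt \<epsilon> * ((sqrt U * B) * B)" using \<epsilon> by (intro mult_left_mono) auto
      then show ?thesis unfolding Pid by (simp add: W_def power2_eq_square algebra_simps)
    qed
    have core': "\<bar>real (card (S_set (sqrt (real b / real a)) r \<epsilon> K L B)) - Theta L * (\<epsilon> * B powr (-1/r) * (K * B)^2 / 2)\<bar>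
       \<le> K * B * sqrt (\<epsilon> * B powr (-1/r)) * K0 * ln B"
      using core[OF a irr \<epsilon> K L Be Beps r0 Plo Phi W0] by (simp add: K0_def c_def)
    have mt: "\<epsilon> * B powr (-1/r) * (K * B)^2 / 2 = \<epsilon> * K^2 / 2 * B powr (2 - 1/r)"
    proof -
      have t0: "B powr (2 + (-1/r)) = B powr 2 * B powr (-1/r)" by (rule powr_add)
      have t1: "B powr 2 = B^2" using B0 by (simp add: powr_numeral)
      have "2 + (-1/r) = 2 - 1/r" by simp
      then have "B^2 * B powr (-1/r) = B powr (2 - 1/r)" using t0 t1 by metis
      then show ?thesis by (simp add: power_mult_distrib algebra_simps)
    qed
    have E2: "X * ln B \<le> K * real b powr (3/2) * B powr (1 - 1/(2*r)) * ln B"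
    proof -
      have "1 \<le> real b powr (3/2)" using b1 by (simp add: ge_one_powr_ge_zero)
      then have "X * 1 \<le> X * real b powr (3/2)" using X0 by (intro mult_left_mono) auto
      then have "X * ln B \<le> X * real b powr (3/2) * ln B" using lnB by (intro mult_right_mono) auto
      then show ?thesis by (simp add: X_def algebra_simps)
    qed
    have E1: "0 \<le> K powr (3/2) * real b powr (1/4) * real (lattice_det L) powr (1/2)
                 * B powr (3/4 * (2 - 1/r)) * ln B" using lnB by simp
    have "\<bar>real (card (S_set (sqrt (real b / real a)) r \<epsilon> K L B)) - Theta L * \<epsilon> * K^2 / 2 * B powr (2 - 1/r)\<bar>
        \<le> sqrt \<epsilon> * X * K0 * ln B"
      using core' unfolding mt Pid by (simp add: algebra_simps)
    also have "\<dots> = (sqrt \<epsilon> * K0) * (X * ln B)" by (simp add: algebra_simps)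
    also have "\<dots> \<le> (sqrt \<epsilon> * K0) * (K powr (3/2) * real b powr (1/4) * real (lattice_det L) powr (1/2)
                 * B powr (3/4 * (2 - 1/r)) * ln B
              + K * real b powr (3/2) * B powr (1 - 1/(2*r)) * ln B)"
      using E1 E2 K0pos \<epsilon> by (intro mult_left_mono) auto
    finally show "\<bar>real (card (S_set (sqrt (real b / real a)) r \<epsilon> K L B))
          - Theta L * \<epsilon> * K^2 / 2 * B powr (2 - 1/r)\<bar>
       \<le> sqrt \<epsilon> * K0 * (K powr (3/2) * real b powr (1/4) * real (lattice_det L) powr (1/2)
                 * B powr (3/4 * (2 - 1/r)) * ln B
              + K * real b powr (3/2) * B powr (1 - 1/(2*r)) * ln B)" .
  qed
qed


end
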